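(* Let $G$ be a finite multigraph (no loops), let $\ell \geq 4$ be an integer, let $s$ be a vertex of $G$, and let $A \subsetneq V(G)$ with $s \notin A$ be such that $\lambda_G(x,y) \geq \ell$ for any two distinct $x,y\in A$ and such that no edge of $G$ has both endvertices outside $A$. Assume that $L(G,s,\tau_A)$ contains an independent set of size $\lceil \deg(s)/2\rceil$. If $\deg(s)$ is odd and at least $5$, then $L(G,s,\tau_A)$ is either (i) a complete bipartite graph with partition classes of sizes $(\deg(s)+1)/2$ and $(\deg(s)-1)/2$, or (ii) the disjoint union of an isolated vertex and a complete bipartite graph with two partition classes of equal size.
   Context: $\lambda_G(x,y)$ is the maximum number of pairwise edge-disjoint $x$–$y$ paths in $G$. Lifting two distinct edges $sx,sy$ means deleting them and adding a new edge $xy$. The target function $\tau_A$ assigns $\ell$ to pairs of vertices both in $A$ and $0$ otherwise; a pair of edges at $s$ is $\tau_A$-admissible if after lifting them the new graph $G'$ satisfies $\lambda_{G'}(x,y)\ge\tau_A(x,y)$ for all distinct $x,y\in V(G)\setminus\{s\}$. The lifting graph $L(G,s,\tau_A)$ has as vertices the edges incident with $s$, two being adjacent iff they form a $\tau_A$-admissible pair. *)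

theory Defs
  imports Main
begin

text \<open>Parallel edges are distinct edge identifiers.\<close>

definition multigraph :: "'v set \<Rightarrow> 'e set \<Rightarrow> ('e \<Rightarrow> 'v set) \<Rightarrow> bool" where
  "multigraph V E ends \<longleftrightarrow> finite V \<and> finite E \<and>
     (\<forall>e\<in>E. ends e \<subseteq> V \<and> card (ends e) = 2)"

definition is_path :: "'e set \<Rightarrow> ('e \<Rightarrow> 'v set) \<Rightarrow> 'v \<Rightarrow> 'v \<Rightarrow> 'e list \<Rightarrow> bool" where
  "is_path E ends x y es \<longleftrightarrow> (\<exists>vs. length vs = length es + 1 \<and> hd vs = x \<and> last vs = y \<and>
     distinct vs \<and> (\<forall>i<length es. es ! i \<in> E \<and> ends (es ! i) = {vs ! i, vs ! Suc i}))"

definition edge_conn :: "'e set \<Rightarrow> ('e \<Rightarrow> 'v set) \<Rightarrow> 'v \<Rightarrow> 'v \<Rightarrow> nat" where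
  "edge_conn E ends x y = Max {k. \<exists>P :: 'e list list. length P = k \<and>
      (\<forall>p\<in>set P. is_path E ends x y p) \<and>
      (\<forall>i<k. \<forall>j<k. i \<noteq> j \<longrightarrow> set (P ! i) \<inter> set (P ! j) = {})}"

definition degree :: "'e set \<Rightarrow> ('e \<Rightarrow> 'v set) \<Rightarrow> 'v \<Rightarrow> nat" where
  "degree E ends s = card {e\<in>E. s \<in> ends e}"

definition other_end :: "('e \<Rightarrow> 'v set) \<Rightarrow> 'v \<Rightarrow> 'e \<Rightarrow> 'v" where
  "other_end ends s e = the_elem (ends e - {s})"

definition tau :: "'v set \<Rightarrow> nat \<Rightarrow> 'v \<Rightarrow> 'v \<Rightarrow> nat" where
  "tau A l x y = (if x \<in> A \<and> y \<in> A then l else 0)"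

text \<open>Lifting the distinct edges e = sx, f = sy: delete both and add a new edge xy.
  Modelled by reusing the identifier e for the new edge xy and deleting f.\<close>
definition lift_edges :: "'e set \<Rightarrow> ('e \<Rightarrow> 'v set) \<Rightarrow> 'v \<Rightarrow> 'e \<Rightarrow> 'e \<Rightarrow> 'e set \<times> ('e \<Rightarrow> 'v set)" where
  "lift_edges E ends s e f = (E - {f}, ends(e := {other_end ends s e, other_end ends s f}))"

text \<open>Adjacency in the lifting graph L(G,s,tau_A): the vertices are the edges at s,
  two distinct ones adjacent iff they form a tau_A-admissible pair.\<close>
definition lift_adm :: "'v set \<Rightarrow> 'e set \<Rightarrow> ('e \<Rightarrow> 'v set) \<Rightarrow> 'v \<Rightarrow> 'v set \<Rightarrow> nat \<Rightarrow> 'e \<Rightarrow> 'e \<Rightarrow> bool" where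
  "lift_adm V E ends s A l e f \<longleftrightarrow> e \<in> E \<and> f \<in> E \<and> e \<noteq> f \<and> s \<in> ends e \<and> s \<in> ends f \<and>
     (\<forall>x\<in>V - {s}. \<forall>y\<in>V - {s}. x \<noteq> y \<longrightarrow>
        edge_conn (fst (lift_edges E ends s e f)) (snd (lift_edges E ends s e f)) x y \<ge> tau A l x y)"

end

theory Submission
  imports Defs
begin

definition cut :: "'e set \<Rightarrow> ('e \<Rightarrow> 'v set) \<Rightarrow> 'v set \<Rightarrow> 'e set" where
  "cut E ends Z = {e\<in>E. ends e \<inter> Z \<noteq> {} \<and> \<not> ends e \<subseteq> Z}"

definition ipath :: "'e set \<Rightarrow> ('e \<Rightarrow> 'v set) \<Rightarrow> 'v list \<Rightarrow> 'e list \<Rightarrow> bool" where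
  "ipath E ends vs es \<longleftrightarrow> length vs = Suc (length es) \<and> distinct vs \<and>
     (\<forall>i<length es. es!i \<in> E \<and> ends (es!i) = {vs!i, vs!Suc i})"

lemma is_path_iff: "is_path E ends x y es \<longleftrightarrow> (\<exists>vs. ipath E ends vs es \<and> hd vs = x \<and> last vs = y)"
  unfolding is_path_def ipath_def by auto

definition pdisj :: "'e list list \<Rightarrow> bool" where
  "pdisj P \<longleftrightarrow> (\<forall>i<length P. \<forall>j<length P. i \<noteq> j \<longrightarrow> set (P!i) \<inter> set (P!j) = {})"

lemma finite_cut: "finite E \<Longrightarrow> finite (cut E ends Z)" by (simp add: cut_def)

lemma cut_Diff: "cut (E - F) ends Z = cut E ends Z - F" by (auto simp: cut_def)

lemma ipath_mono: "ipath E ends vs es \<Longrightarrow> E \<subseteq> E' \<Longrightarrow> ipath E' ends vs es"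
  by (auto simp: ipath_def)

lemma ipath_edges: "ipath E ends vs es \<Longrightarrow> set es \<subseteq> E"
  by (auto simp: ipath_def in_set_conv_nth)

lemma ipath_ends_sub: "ipath E ends vs es \<Longrightarrow> g \<in> set es \<Longrightarrow> ends g \<subseteq> set vs"
proof -
  assume p: "ipath E ends vs es" and g: "g \<in> set es"
  then obtain i where i: "i < length es" "g = es!i" by (auto simp: in_set_conv_nth)
  with p have "ends g = {vs!i, vs!Suc i}" "Suc i < length vs" by (auto simp: ipath_def)
  then show ?thesis by auto
qed

lemma ipath_ne: "ipath E ends vs es \<Longrightarrow> vs \<noteq> []"
  by (auto simp: ipath_def)

lemma pdisj_Cons: "pdisj (q # P) \<longleftrightarrow> pdisj P \<and> (\<forall>p\<in>set P. set q \<inter> set p = {})"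
proof
  assume H: "pdisj (q#P)"
  show "pdisj P \<and> (\<forall>p\<in>set P. set q \<inter> set p = {})"
  proof
    show "pdisj P" unfolding pdisj_def
    proof (intro allI impI)
      fix i j assume "i<length P" "j<length P" "i\<noteq>j"
      then show "set (P!i) \<inter> set (P!j) = {}"
        using H[unfolded pdisj_def, rule_format, of "Suc i" "Suc j"] by simp
    qed
    show "\<forall>p\<in>set P. set q \<inter> set p = {}"
    proof
      fix p assume "p\<in>set P"
      then obtain j where "j<length P" "p = P!j" by (auto simp: in_set_conv_nth)
      then show "set q \<inter> set p = {}"
        using H[unfolded pdisj_def, rule_format, of 0 "Suc j"] by simp
    qed
  qed
next
  assume H: "pdisj P \<and> (\<forall>p\<in>set P. set q \<inter> set p = {})"
  show "pdisj (q#P)" unfolding pdisj_def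
  proof (intro allI impI)
    fix i j assume "i < length (q#P)" "j < length (q#P)" "i\<noteq>j"
    then show "set ((q#P)!i) \<inter> set ((q#P)!j) = {}"
    proof (cases i)
      case 0
      then obtain j' where "j = Suc j'" using \<open>i\<noteq>j\<close> by (cases j) auto
      then show ?thesis using H 0 \<open>j < length (q#P)\<close> by (simp add: nth_mem)
    next
      case (Suc i')
      show ?thesis
      proof (cases j)
        case 0 then show ?thesis using H Suc \<open>i < length (q#P)\<close> by (auto simp: nth_mem)
      next
        case (Suc j') then show ?thesis using H \<open>i = Suc i'\<close> \<open>i < length (q#P)\<close>
          \<open>j < length (q#P)\<close> \<open>i\<noteq>j\<close> unfolding pdisj_def by simp
      qed
    qed
  qed
qed

lemma path_crosses:
  assumes p: "ipath E ends vs es" and h: "hd vs \<in> Z" and l: "last vs \<notin> Z"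
  shows "\<exists>e\<in>set es. e \<in> cut E ends Z"
proof -
  have len: "length vs = Suc (length es)" using p by (simp add: ipath_def)
  have ne: "vs \<noteq> []" using len by auto
  have lastn: "last vs = vs ! length es" using ne len by (simp add: last_conv_nth)
  have hd0: "hd vs = vs ! 0" using ne by (simp add: hd_conv_nth)
  have esne: "es \<noteq> []" using h l lastn hd0 by auto
  define P where "P = (\<lambda>j. length es \<le> j \<or> vs!j \<notin> Z)"
  have "\<not> P 0" using h hd0 esne by (simp add: P_def)
  moreover have "\<exists>n. P n" by (auto simp: P_def)
  ultimately obtain i where i: "\<not> P i" "P (Suc i)"
  proof -
    assume a0: "\<not> P 0" and ex: "\<exists>n. P n" and th: "\<And>i. \<not> P i \<Longrightarrow> P (Suc i) \<Longrightarrow> thesis"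
    obtain n where n: "P n" "\<forall>m<n. \<not> P m" using ex exists_least_iff[of P] by blast
    then obtain n' where "n = Suc n'" using a0 by (cases n) auto
    then show thesis using th n by auto
  qed
  then have i1: "i < length es" "vs!i \<in> Z" by (auto simp: P_def)
  have i2: "vs!Suc i \<notin> Z"
  proof (cases "Suc i = length es")
    case True then show ?thesis using l lastn by simp
  next
    case False then show ?thesis using i(2) i1 by (simp add: P_def)
  qed
  have "es!i \<in> E" "ends (es!i) = {vs!i, vs!Suc i}" using p i1 by (auto simp: ipath_def)
  then have "es!i \<in> cut E ends Z" using i1 i2 by (auto simp: cut_def)
  then show ?thesis using i1 by auto
qed

lemma paths_le_cut:
  assumes fin: "finite E" and len: "length P = k" and paths: "\<forall>p\<in>set P. is_path E ends a b p"
    and dis: "pdisj P" and aZ: "a \<in> Z" and bZ: "b \<notin> Z"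
  shows "k \<le> card (cut E ends Z)"
proof -
  have "\<forall>i<k. \<exists>e. e \<in> set (P!i) \<and> e \<in> cut E ends Z"
  proof (intro allI impI)
    fix i assume "i < k"
    then have "is_path E ends a b (P!i)" using paths len by auto
    then obtain vs where "ipath E ends vs (P!i)" "hd vs = a" "last vs = b" by (auto simp: is_path_iff)
    then have "\<exists>e\<in>set (P!i). e \<in> cut E ends Z" using path_crosses[of E ends vs "P!i" Z] aZ bZ by simp
    then show "\<exists>e. e \<in> set (P!i) \<and> e \<in> cut E ends Z" by blast
  qed
  then obtain c where c: "\<forall>i<k. c i \<in> set (P!i) \<and> c i \<in> cut E ends Z" by metis
  have "inj_on c {..<k}"
  proof (rule inj_onI)
    fix i j assume "i \<in> {..<k}" "j \<in> {..<k}" "c i = c j"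
    show "i = j"
    proof (rule ccontr)
      assume "i \<noteq> j"
      then have "set (P!i) \<inter> set (P!j) = {}" using dis len \<open>i \<in> {..<k}\<close> \<open>j \<in> {..<k}\<close>
        unfolding pdisj_def by simp
      moreover have "c i \<in> set (P!i)" "c j \<in> set (P!j)" using c \<open>i \<in> {..<k}\<close> \<open>j \<in> {..<k}\<close> by auto
      ultimately show False using \<open>c i = c j\<close> by auto
    qed
  qed
  moreover have "c ` {..<k} \<subseteq> cut E ends Z" using c by auto
  ultimately have "card {..<k} \<le> card (cut E ends Z)"
    using card_inj_on_le finite_cut[OF fin] by blast
  then show ?thesis by simp
qed

definition pset :: "'e set \<Rightarrow> ('e \<Rightarrow> 'v set) \<Rightarrow> 'v \<Rightarrow> 'v \<Rightarrow> nat set" where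
  "pset E ends x y = {k. \<exists>P :: 'e list list. length P = k \<and>
      (\<forall>p\<in>set P. is_path E ends x y p) \<and>
      (\<forall>i<k. \<forall>j<k. i \<noteq> j \<longrightarrow> set (P ! i) \<inter> set (P ! j) = {})}"

lemma edge_conn_pset: "edge_conn E ends x y = Max (pset E ends x y)"
  by (simp add: edge_conn_def pset_def)

lemma pset_iff: "j \<in> pset E ends a b \<longleftrightarrow> (\<exists>P. length P = j \<and> (\<forall>p\<in>set P. is_path E ends a b p) \<and> pdisj P)"
proof
  assume "j \<in> pset E ends a b"
  then obtain P where "length P = j" "\<forall>p\<in>set P. is_path E ends a b p"
    "\<forall>i<j. \<forall>k<j. i \<noteq> k \<longrightarrow> set (P ! i) \<inter> set (P ! k) = {}" unfolding pset_def by blast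
  then show "\<exists>P. length P = j \<and> (\<forall>p\<in>set P. is_path E ends a b p) \<and> pdisj P"
    unfolding pdisj_def by auto
next
  assume "\<exists>P. length P = j \<and> (\<forall>p\<in>set P. is_path E ends a b p) \<and> pdisj P"
  then obtain P where "length P = j" "\<forall>p\<in>set P. is_path E ends a b p" "pdisj P" by blast
  then show "j \<in> pset E ends a b" unfolding pset_def pdisj_def by auto
qed

lemma pset_bound: "finite E \<Longrightarrow> a \<in> Z \<Longrightarrow> b \<notin> Z \<Longrightarrow> j \<in> pset E ends a b \<Longrightarrow> j \<le> card (cut E ends Z)"
proof -
  assume f: "finite E" and a: "a \<in> Z" and b: "b \<notin> Z" and j: "j \<in> pset E ends a b"
  from j obtain P where P: "length P = j" "\<forall>p\<in>set P. is_path E ends a b p" "pdisj P"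
    unfolding pset_iff by blast
  show ?thesis by (rule paths_le_cut[OF f P a b])
qed

lemma pset_finite: "finite E \<Longrightarrow> a \<noteq> b \<Longrightarrow> finite (pset E ends a b)"
proof -
  assume "finite E" "a \<noteq> b"
  then have "pset E ends a b \<subseteq> {..card (cut E ends {a})}" using pset_bound[of E a "{a}" b] by auto
  then show ?thesis using finite_subset by blast
qed

lemma pset_0: "0 \<in> pset E ends a b"
  unfolding pset_iff by (rule exI[of _ "[]"]) (simp add: pdisj_def)

lemma ec_le: "finite E \<Longrightarrow> a \<in> Z \<Longrightarrow> b \<notin> Z \<Longrightarrow> edge_conn E ends a b \<le> card (cut E ends Z)"
proof -
  assume f: "finite E" and a: "a \<in> Z" and b: "b \<notin> Z"
  then have ab: "a \<noteq> b" by auto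
  have "Max (pset E ends a b) \<in> pset E ends a b"
    using Max_in[OF pset_finite[OF f ab]] pset_0[of E ends a b] by auto
  then show ?thesis using pset_bound[OF f a b] by (simp add: edge_conn_pset)
qed

lemma ec_ge: "finite E \<Longrightarrow> a \<noteq> b \<Longrightarrow> length P = k \<Longrightarrow> \<forall>p\<in>set P. is_path E ends a b p \<Longrightarrow> pdisj P
   \<Longrightarrow> k \<le> edge_conn E ends a b"
proof -
  assume f: "finite E" and ab: "a \<noteq> b" and P: "length P = k" "\<forall>p\<in>set P. is_path E ends a b p" "pdisj P"
  then have "k \<in> pset E ends a b" unfolding pset_iff by blast
  then show ?thesis using Max_ge[OF pset_finite[OF f ab]] by (simp add: edge_conn_pset)
qed

lemma ipath_rev: "ipath E ends vs es \<Longrightarrow> ipath E ends (rev vs) (rev es)"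
proof -
  assume p: "ipath E ends vs es"
  define n where "n = length es"
  have len: "length vs = Suc n" using p by (simp add: ipath_def n_def)
  have "\<forall>i<n. rev es ! i \<in> E \<and> ends (rev es ! i) = {rev vs ! i, rev vs ! Suc i}"
  proof (intro allI impI)
    fix i assume i: "i < n"
    have e1: "rev es ! i = es ! (n - Suc i)" using i by (simp add: rev_nth n_def)
    have v1: "rev vs ! i = vs ! (n - i)" using i len by (simp add: rev_nth)
    have v2: "rev vs ! Suc i = vs ! (n - Suc i)" using i len by (simp add: rev_nth)
    have "n - Suc i < length es" using i by (simp add: n_def)
    then have "es ! (n - Suc i) \<in> E \<and> ends (es ! (n - Suc i)) = {vs ! (n - Suc i), vs ! Suc (n - Suc i)}"
      using p by (simp add: ipath_def)
    moreover have "Suc (n - Suc i) = n - i" using i by simp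
    ultimately show "rev es ! i \<in> E \<and> ends (rev es ! i) = {rev vs ! i, rev vs ! Suc i}"
      using e1 v1 v2 by (simp add: insert_commute)
  qed
  then show ?thesis using p len by (simp add: ipath_def n_def)
qed

lemma ipath_glue:
  assumes p1: "ipath E ends vs1 es1" and p2: "ipath E ends vs2 es2" and c: "c \<in> E"
    and ec: "ends c = {last vs1, hd vs2}" and dj: "set vs1 \<inter> set vs2 = {}"
  shows "ipath E ends (vs1 @ vs2) (es1 @ c # es2)"
proof -
  have l1: "length vs1 = Suc (length es1)" and l2: "length vs2 = Suc (length es2)"
    using p1 p2 by (auto simp: ipath_def)
  have ne: "vs1 \<noteq> []" "vs2 \<noteq> []" using l1 l2 by auto
  have d: "distinct (vs1 @ vs2)" using p1 p2 dj by (auto simp: ipath_def)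
  have "\<forall>i<length (es1 @ c # es2). (es1 @ c # es2) ! i \<in> E \<and>
      ends ((es1 @ c # es2) ! i) = {(vs1 @ vs2) ! i, (vs1 @ vs2) ! Suc i}"
  proof (intro allI impI)
    fix i assume i: "i < length (es1 @ c # es2)"
    show "(es1 @ c # es2) ! i \<in> E \<and> ends ((es1 @ c # es2) ! i) = {(vs1 @ vs2) ! i, (vs1 @ vs2) ! Suc i}"
    proof (cases "i < length es1")
      case True
      then have "(es1 @ c # es2) ! i = es1 ! i" "(vs1 @ vs2) ! i = vs1 ! i" "(vs1 @ vs2) ! Suc i = vs1 ! Suc i"
        using l1 by (auto simp: nth_append)
      then show ?thesis using p1 True by (simp add: ipath_def)
    next
      case False
      show ?thesis
      proof (cases "i = length es1")
        case True
        then have "(es1 @ c # es2) ! i = c" "(vs1 @ vs2) ! i = last vs1" "(vs1 @ vs2) ! Suc i = hd vs2"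
          using l1 l2 ne by (auto simp: nth_append last_conv_nth hd_conv_nth)
        then show ?thesis using c ec by simp
      next
        case False
        define j where "j = i - Suc (length es1)"
        have ij: "i = Suc (length es1) + j" using False \<open>\<not> i < length es1\<close> by (simp add: j_def)
        have j: "j < length es2" using i ij by simp
        have "(es1 @ c # es2) ! i = es2 ! j" "(vs1 @ vs2) ! i = vs2 ! j" "(vs1 @ vs2) ! Suc i = vs2 ! Suc j"
          using ij l1 by (auto simp: nth_append)
        then show ?thesis using p2 j by (simp add: ipath_def)
      qed
    qed
  qed
  then show ?thesis using l1 l2 d by (simp add: ipath_def)
qed

lemma img_in:
  assumes e: "ends = {p,q}" and b: "b \<notin> X" and im: "(\<lambda>w. if w\<in>X then w else b) ` ends = {x,y}"
    and x: "x \<in> X" and y: "y \<in> X"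
  shows "ends = {x,y}"
proof -
  let ?f = "\<lambda>w. if w\<in>X then w else b"
  have "?f p \<in> {x,y}" "?f q \<in> {x,y}" using im e by blast+
  then have "?f p \<in> X" "?f q \<in> X" using x y by auto
  then have "p \<in> X" "q \<in> X" using b by (auto split: if_splits)
  then have "?f ` ends = ends" using e by auto
  then show ?thesis using im by simp
qed

lemma img_out:
  assumes e: "ends = {p,q}" and b: "b \<notin> X" and im: "(\<lambda>w. if w\<in>X then w else b) ` ends = {x,b}"
    and x: "x \<in> X"
  shows "\<exists>w. w \<notin> X \<and> ends = {x,w}"
proof -
  let ?f = "\<lambda>w. if w\<in>X then w else b"
  have im2: "{?f p, ?f q} = {x,b}" using im e by (simp only: image_insert image_empty)
  have xb: "x \<noteq> b" using x b by auto
  show ?thesis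
  proof (cases "p \<in> X")
    case True
    have "q \<notin> X"
    proof
      assume "q \<in> X"
      then have "{p,q} = {x,b}" using im2 True by simp
      then show False using True \<open>q \<in> X\<close> b by (auto simp: doubleton_eq_iff)
    qed
    then have "{p,b} = {x,b}" using im2 True by simp
    then have "p = x" using xb by (auto simp: doubleton_eq_iff)
    then show ?thesis using e \<open>q \<notin> X\<close> by blast
  next
    case False
    have "q \<in> X"
    proof (rule ccontr)
      assume "q \<notin> X"
      then have "{b} = {x,b}" using im2 False by simp
      then show False using xb by auto
    qed
    then have "{b,q} = {x,b}" using im2 False by simp
    then have "q = x" using xb by (auto simp: doubleton_eq_iff)
    then show ?thesis using e False by blast
  qed
qed

lemma contr1:
  assumes p: "ipath E (\<lambda>e. (\<lambda>w. if w \<in> X then w else b) ` ends e) vs es"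
    and bX: "b \<notin> X" and hd: "hd vs \<in> X" and last: "last vs = b" and fm: "\<forall>e\<in>E. \<exists>p q. ends e = {p,q}"
  obtains vs' c where "vs = vs' @ [b]" "es = butlast es @ [c]" "ipath E ends vs' (butlast es)" "set vs' \<subseteq> X"
     "c \<in> E" "vs' \<noteq> []" "\<exists>w. w \<notin> X \<and> ends c = {last vs', w}"
proof -
  let ?f = "\<lambda>w. if w \<in> X then w else b"
  define n where "n = length es"
  have len: "length vs = Suc n" using p by (simp add: ipath_def n_def)
  have dist: "distinct vs" using p by (simp add: ipath_def)
  have E_i: "\<And>i. i < n \<Longrightarrow> es!i \<in> E \<and> ?f ` ends (es!i) = {vs!i, vs!Suc i}"
    using p by (simp add: ipath_def n_def)
  have vsne: "vs \<noteq> []" using len by auto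
  have lastn: "vs ! n = b" using last len vsne by (simp add: last_conv_nth)
  have hd0: "vs ! 0 \<in> X" using hd vsne by (simp add: hd_conv_nth)
  have n0: "n \<noteq> 0"
  proof
    assume "n = 0" then show False using lastn hd0 bX by simp
  qed
  have vsX: "\<And>i. i < n \<Longrightarrow> vs!i \<in> X"
  proof -
    fix i assume i: "i < n"
    have "vs!i \<in> ?f ` ends (es!i)" using E_i[OF i] by simp
    then obtain w where w: "w \<in> ends (es!i)" "vs!i = ?f w" by blast
    show "vs!i \<in> X"
    proof (cases "w \<in> X")
      case True then show ?thesis using w by simp
    next
      case False
      then have "vs!i = vs!n" using w lastn by simp
      then have "i = n" using dist len i by (simp add: nth_eq_iff_index_eq)
      then show ?thesis using i by simp
    qed
  qed
  define vs' where "vs' = butlast vs"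
  have lvs': "length vs' = n" using len by (simp add: vs'_def)
  have vs'n: "\<And>i. i < n \<Longrightarrow> vs'!i = vs!i" using len by (simp add: vs'_def nth_butlast)
  have vsdec: "vs = vs' @ [b]" using append_butlast_last_id[OF vsne] last unfolding vs'_def by simp
  have setX: "set vs' \<subseteq> X"
  proof
    fix x assume "x \<in> set vs'"
    then obtain i where "i < n" "x = vs'!i" using lvs' by (auto simp: in_set_conv_nth)
    then show "x \<in> X" using vsX vs'n by simp
  qed
  have esdec: "es = butlast es @ [last es]" using n0 by (simp add: n_def)
  have lbe: "length (butlast es) = n - 1" by (simp add: n_def)
  have ip: "ipath E ends vs' (butlast es)"
    unfolding ipath_def
  proof (intro conjI allI impI)
    show "length vs' = Suc (length (butlast es))" using lvs' lbe n0 by simp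
    show "distinct vs'" using dist by (simp add: vs'_def distinct_butlast)
    fix i assume i: "i < length (butlast es)"
    then have i1: "i < n" "Suc i < n" using lbe by auto
    have be: "butlast es ! i = es ! i" using i by (simp add: nth_butlast)
    obtain p q where pq: "ends (es!i) = {p,q}" using fm E_i[OF i1(1)] by blast
    have "ends (es!i) = {vs!i, vs!Suc i}"
      by (rule img_in[OF pq bX]) (use E_i[OF i1(1)] vsX[OF i1(1)] vsX[OF i1(2)] in auto)
    then show "butlast es ! i \<in> E" "ends (butlast es ! i) = {vs' ! i, vs' ! Suc i}"
      using be E_i[OF i1(1)] vs'n i1 by auto
  qed
  define c where "c = last es"
  have cn: "c = es ! (n - 1)" using n0 by (simp add: c_def n_def last_conv_nth)
  have cE: "c \<in> E" "?f ` ends c = {vs!(n-1), b}" using E_i[of "n-1"] n0 cn lastn by auto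
  obtain p q where pq: "ends c = {p,q}" using fm cE(1) by blast
  have vs'ne: "vs' \<noteq> []" using lvs' n0 by auto
  have lv: "last vs' = vs!(n-1)" using lvs' n0 vs'n[of "n-1"] vs'ne by (simp add: last_conv_nth)
  have "\<exists>w. w \<notin> X \<and> ends c = {vs!(n-1), w}"
    using img_out[OF pq bX] cE(2) vsX[of "n-1"] n0 by simp
  then obtain w where w: "w \<notin> X" "ends c = {last vs', w}" using lv by auto
  show ?thesis
    by (rule that[of vs' c]) (use vsdec esdec ip setX cE(1) w vs'ne in \<open>auto simp: c_def\<close>)
qed

lemma contr2:
  assumes p: "ipath E (\<lambda>e. (\<lambda>w. if w \<in> X then a else w) ` ends e) vs es"
    and aX: "a \<in> X" and hd: "hd vs = a" and last: "last vs \<notin> X" and fm: "\<forall>e\<in>E. \<exists>p q. ends e = {p,q}"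
  obtains vs' c where "vs = a # vs'" "es = c # tl es" "ipath E ends vs' (tl es)" "set vs' \<inter> X = {}"
     "c \<in> E" "vs' \<noteq> []" "\<exists>w. w \<in> X \<and> ends c = {hd vs', w}"
proof -
  have feq: "(\<lambda>w. if w \<in> X then a else w) = (\<lambda>w. if w \<in> - X then w else a)" by auto
  have p': "ipath E (\<lambda>e. (\<lambda>w. if w \<in> - X then w else a) ` ends e) (rev vs) (rev es)"
    using ipath_rev[OF p] unfolding feq .
  have vsne: "vs \<noteq> []" using p by (auto simp: ipath_def)
  have h': "hd (rev vs) \<in> - X" using last vsne by (simp add: hd_rev)
  have l': "last (rev vs) = a" using hd vsne by (simp add: last_rev)
  have aX': "a \<notin> - X" using aX by simp
  obtain vs'' c where r: "rev vs = vs'' @ [a]" "rev es = butlast (rev es) @ [c]"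
    "ipath E ends vs'' (butlast (rev es))" "set vs'' \<subseteq> - X" "c \<in> E" "vs'' \<noteq> []"
    "\<exists>w. w \<notin> - X \<and> ends c = {last vs'', w}"
    by (rule contr1[OF p' aX' h' l' fm])
  have vsd: "vs = a # rev vs''"
  proof -
    have "vs = rev (rev vs)" by simp
    also have "\<dots> = rev (vs'' @ [a])" using r(1) by simp
    also have "\<dots> = a # rev vs''" by simp
    finally show ?thesis .
  qed
  have "rev (rev es) = rev (butlast (rev es) @ [c])" by (rule arg_cong[OF r(2)])
  then have esd: "es = c # tl es" by (simp add: butlast_rev)
  have ip: "ipath E ends (rev vs'') (tl es)" using ipath_rev[OF r(3)] by (simp add: butlast_rev)
  have "hd (rev vs'') = last vs''" using r(6) by (simp add: hd_rev)
  moreover have "set (rev vs'') \<inter> X = {}" using r(4) by auto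
  moreover have "rev vs'' \<noteq> []" using r(6) by simp
  moreover obtain w where "w \<in> X" "ends c = {last vs'', w}" using r(7) by auto
  ultimately show ?thesis
    by (intro that[of "rev vs''" c]) (use vsd esd ip r(5) in auto)
qed

lemma glue_all:
  assumes fin: "finite E" and fm: "\<forall>e\<in>E. \<exists>p q. ends e = {p,q}" and aX: "a \<in> X" and bX: "b \<notin> X"
    and ck: "card (cut E ends X) = k"
    and P1: "length P1 = k" "\<forall>p\<in>set P1. is_path E (\<lambda>e. (\<lambda>w. if w \<in> X then w else b) ` ends e) a b p" "pdisj P1"
    and P2: "length P2 = k" "\<forall>p\<in>set P2. is_path E (\<lambda>e. (\<lambda>w. if w \<in> X then a else w) ` ends e) a b p" "pdisj P2"
  shows "\<exists>P. length P = k \<and> (\<forall>p\<in>set P. is_path E ends a b p) \<and> pdisj P"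
proof -
  have F1: "P1!i \<noteq> [] \<and> last (P1!i) \<in> cut E ends X \<and> (\<forall>g\<in>set (butlast (P1!i)). ends g \<subseteq> X) \<and>
      (\<exists>vs'. ipath E ends vs' (butlast (P1!i)) \<and> hd vs' = a \<and> set vs' \<subseteq> X \<and> vs' \<noteq> [] \<and>
         (\<exists>w. w \<notin> X \<and> ends (last (P1!i)) = {last vs', w}))" if i: "i < k" for i
  proof -
    have "is_path E (\<lambda>e. (\<lambda>w. if w \<in> X then w else b) ` ends e) a b (P1!i)" using P1 i by simp
    then obtain vs where vs: "ipath E (\<lambda>e. (\<lambda>w. if w \<in> X then w else b) ` ends e) vs (P1!i)" "hd vs = a" "last vs = b"
      by (auto simp: is_path_iff)
    have hX: "hd vs \<in> X" using vs(2) aX by simp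
    obtain vs' c where r: "vs = vs' @ [b]" "P1!i = butlast (P1!i) @ [c]" "ipath E ends vs' (butlast (P1!i))"
      "set vs' \<subseteq> X" "c \<in> E" "vs' \<noteq> []" "\<exists>w. w \<notin> X \<and> ends c = {last vs', w}"
      by (rule contr1[OF vs(1) bX hX vs(3) fm])
    have lc: "last (P1!i) = c" using r(2) by (metis last_snoc)
    have ne: "P1!i \<noteq> []" using r(2) by (metis snoc_eq_iff_butlast)
    have hv: "hd vs' = a" using r(1) r(6) vs(2) by simp
    have lX: "last vs' \<in> X" using r(4) r(6) by auto
    have cc: "c \<in> cut E ends X" using r(5) r(7) lX by (auto simp: cut_def)
    have sub: "\<forall>g\<in>set (butlast (P1!i)). ends g \<subseteq> X" using ipath_ends_sub[OF r(3)] r(4) by blast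
    show ?thesis using lc ne hv cc sub r(3) r(4) r(6) r(7) by auto
  qed
  have F2: "P2!j \<noteq> [] \<and> hd (P2!j) \<in> cut E ends X \<and> (\<forall>g\<in>set (P2!j). \<not> ends g \<subseteq> X) \<and>
      (\<exists>vs'. ipath E ends vs' (tl (P2!j)) \<and> last vs' = b \<and> set vs' \<inter> X = {} \<and> vs' \<noteq> [] \<and>
         (\<exists>w. w \<in> X \<and> ends (hd (P2!j)) = {hd vs', w}))" if j: "j < k" for j
  proof -
    have "is_path E (\<lambda>e. (\<lambda>w. if w \<in> X then a else w) ` ends e) a b (P2!j)" using P2 j by simp
    then obtain vs where vs: "ipath E (\<lambda>e. (\<lambda>w. if w \<in> X then a else w) ` ends e) vs (P2!j)" "hd vs = a" "last vs = b"
      by (auto simp: is_path_iff)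
    have lX: "last vs \<notin> X" using vs(3) bX by simp
    obtain vs' c where r: "vs = a # vs'" "P2!j = c # tl (P2!j)" "ipath E ends vs' (tl (P2!j))"
      "set vs' \<inter> X = {}" "c \<in> E" "vs' \<noteq> []" "\<exists>w. w \<in> X \<and> ends c = {hd vs', w}"
      by (rule contr2[OF vs(1) aX vs(2) lX fm])
    have hc: "hd (P2!j) = c" using r(2) by (metis list.sel(1))
    have ne: "P2!j \<noteq> []" using r(2) by (metis list.distinct(1))
    have lv: "last vs' = b" using r(1) r(6) vs(3) by simp
    have hX: "hd vs' \<notin> X" using r(4) r(6) by (auto simp: hd_in_set[OF r(6)] dest: hd_in_set)
    obtain w where w: "w \<in> X" "ends c = {hd vs', w}" using r(7) by blast
    have cc: "c \<in> cut E ends X" using r(5) w hX by (auto simp: cut_def)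
    have tl: "\<forall>g\<in>set (tl (P2!j)). \<not> ends g \<subseteq> X"
    proof
      fix g assume g: "g \<in> set (tl (P2!j))"
      have "ends g \<subseteq> set vs'" using ipath_ends_sub[OF r(3) g] .
      moreover have "g \<in> E" using ipath_edges[OF r(3)] g by blast
      then obtain p q where "ends g = {p,q}" using fm by blast
      ultimately show "\<not> ends g \<subseteq> X" using r(4) by auto
    qed
    have all: "\<forall>g\<in>set (P2!j). \<not> ends g \<subseteq> X"
    proof
      fix g assume "g \<in> set (P2!j)"
      then have "g = c \<or> g \<in> set (tl (P2!j))" using r(2) by (metis set_ConsD)
      then show "\<not> ends g \<subseteq> X" using tl cc by (auto simp: cut_def)
    qed
    show ?thesis using hc ne lv cc all r(3) r(4) r(6) w by auto
  qed
  have inj1: "last (P1!i) \<noteq> last (P1!i')" if "i < k" "i' < k" "i \<noteq> i'" for i i'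
  proof
    assume eq: "last (P1!i) = last (P1!i')"
    have "last (P1!i) \<in> set (P1!i)" using F1[OF that(1)] by simp
    moreover have "last (P1!i') \<in> set (P1!i')" using F1[OF that(2)] by simp
    moreover have "set (P1!i) \<inter> set (P1!i') = {}" using P1(3) P1(1) that unfolding pdisj_def by simp
    ultimately show False using eq by auto
  qed
  have inj2: "inj_on (\<lambda>j. hd (P2!j)) {..<k}"
  proof (rule inj_onI)
    fix j j' assume j: "j \<in> {..<k}" "j' \<in> {..<k}" and eq: "hd (P2!j) = hd (P2!j')"
    show "j = j'"
    proof (rule ccontr)
      assume "j \<noteq> j'"
      have "hd (P2!j) \<in> set (P2!j)" using F2[of j] j by simp
      moreover have "hd (P2!j') \<in> set (P2!j')" using F2[of j'] j by simp
      moreover have "set (P2!j) \<inter> set (P2!j') = {}" using P2(3) P2(1) j \<open>j \<noteq> j'\<close> unfolding pdisj_def by simp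
      ultimately show False using eq by auto
    qed
  qed
  have im2: "(\<lambda>j. hd (P2!j)) ` {..<k} = cut E ends X"
  proof (rule card_subset_eq)
    show "finite (cut E ends X)" using finite_cut[OF fin] .
    show "(\<lambda>j. hd (P2!j)) ` {..<k} \<subseteq> cut E ends X" using F2 by auto
    show "card ((\<lambda>j. hd (P2!j)) ` {..<k}) = card (cut E ends X)" using card_image[OF inj2] ck by simp
  qed
  have ex: "\<forall>i. \<exists>j. i < k \<longrightarrow> j < k \<and> hd (P2!j) = last (P1!i)"
  proof
    fix i show "\<exists>j. i < k \<longrightarrow> j < k \<and> hd (P2!j) = last (P1!i)"
    proof (cases "i < k")
      case True
      then have "last (P1!i) \<in> (\<lambda>j. hd (P2!j)) ` {..<k}" using F1[OF True] im2 by simp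
      then show ?thesis by auto
    qed simp
  qed
  obtain \<sigma> where sg: "\<forall>i. i < k \<longrightarrow> \<sigma> i < k \<and> hd (P2!(\<sigma> i)) = last (P1!i)"
    using choice[OF ex] by blast
  have sinj: "\<sigma> i \<noteq> \<sigma> i'" if "i < k" "i' < k" "i \<noteq> i'" for i i'
    using sg inj1[OF that] that by metis
  define Q where "Q = map (\<lambda>i. butlast (P1!i) @ P2!(\<sigma> i)) [0..<k]"
  have lQ: "length Q = k" by (simp add: Q_def)
  have Qi: "Q!i = butlast (P1!i) @ P2!(\<sigma> i)" if "i < k" for i using that by (simp add: Q_def)
  have paths: "is_path E ends a b (Q!i)" if i: "i < k" for i
  proof -
    have si: "\<sigma> i < k" "hd (P2!(\<sigma> i)) = last (P1!i)" using sg i by auto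
    obtain vs1 w1 where v1: "ipath E ends vs1 (butlast (P1!i))" "hd vs1 = a" "set vs1 \<subseteq> X" "vs1 \<noteq> []"
      "w1 \<notin> X" "ends (last (P1!i)) = {last vs1, w1}"
      using F1[OF i] by blast
    obtain vs2 w2 where v2: "ipath E ends vs2 (tl (P2!(\<sigma> i)))" "last vs2 = b" "set vs2 \<inter> X = {}" "vs2 \<noteq> []"
      "w2 \<in> X" "ends (hd (P2!(\<sigma> i))) = {hd vs2, w2}"
      using F2[OF si(1)] by blast
    define c where "c = last (P1!i)"
    have cE: "c \<in> E" using F1[OF i] by (simp add: c_def cut_def)
    have l1: "last vs1 \<in> X" using v1(3,4) by auto
    have h2: "hd vs2 \<notin> X" using v2(3,4) hd_in_set[OF v2(4)] by blast
    have "{last vs1, w1} = {hd vs2, w2}" using v1(6) v2(6) si(2) by simp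
    then have ec: "ends c = {last vs1, hd vs2}" using l1 h2 v1(5) v2(5) v1(6) unfolding c_def
      by (auto simp: doubleton_eq_iff)
    have dj: "set vs1 \<inter> set vs2 = {}" using v1(3) v2(3) by auto
    have g: "ipath E ends (vs1 @ vs2) (butlast (P1!i) @ c # tl (P2!(\<sigma> i)))"
      by (rule ipath_glue[OF v1(1) v2(1) cE ec dj])
    have "c # tl (P2!(\<sigma> i)) = P2!(\<sigma> i)" using F2[OF si(1)] si(2) unfolding c_def by (metis list.collapse)
    then have "butlast (P1!i) @ c # tl (P2!(\<sigma> i)) = Q!i" using Qi[OF i] by simp
    moreover have "hd (vs1 @ vs2) = a" "last (vs1 @ vs2) = b" using v1 v2 by auto
    ultimately show ?thesis using g unfolding is_path_iff by metis
  qed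
  have dis: "pdisj Q"
    unfolding pdisj_def
  proof (intro allI impI)
    fix i i' assume i: "i < length Q" "i' < length Q" "i \<noteq> i'"
    then have ik: "i < k" "i' < k" using lQ by auto
    have s1: "\<sigma> i < k" "\<sigma> i' < k" "\<sigma> i \<noteq> \<sigma> i'" using sg ik sinj[OF ik i(3)] by auto
    have d1: "set (P1!i) \<inter> set (P1!i') = {}" using P1(3) P1(1) ik i(3) unfolding pdisj_def by simp
    have d2: "set (P2!(\<sigma> i)) \<inter> set (P2!(\<sigma> i')) = {}" using P2(3) P2(1) s1 unfolding pdisj_def by simp
    have X1: "\<forall>g\<in>set (butlast (P1!i)). ends g \<subseteq> X" "\<forall>g\<in>set (butlast (P1!i')). ends g \<subseteq> X"
      using F1 ik by blast+
    have X2: "\<forall>g\<in>set (P2!(\<sigma> i)). \<not> ends g \<subseteq> X" "\<forall>g\<in>set (P2!(\<sigma> i')). \<not> ends g \<subseteq> X"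
      using F2 s1 by blast+
    have b1: "set (butlast (P1!i)) \<subseteq> set (P1!i)" "set (butlast (P1!i')) \<subseteq> set (P1!i')"
      by (auto dest: in_set_butlastD)
    show "set (Q!i) \<inter> set (Q!i') = {}"
    proof (rule ccontr)
      assume "set (Q!i) \<inter> set (Q!i') \<noteq> {}"
      then obtain g where g: "g \<in> set (Q!i)" "g \<in> set (Q!i')" by blast
      have g1: "g \<in> set (butlast (P1!i)) \<or> g \<in> set (P2!(\<sigma> i))" using g(1) Qi[OF ik(1)] by simp
      have g2: "g \<in> set (butlast (P1!i')) \<or> g \<in> set (P2!(\<sigma> i'))" using g(2) Qi[OF ik(2)] by simp
      show False using g1 g2 d1 d2 X1 X2 b1 by blast
    qed
  qed
  show ?thesis using lQ paths dis by (metis in_set_conv_nth)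
qed

lemma U_fin: "finite E \<Longrightarrow> \<forall>e\<in>E. \<exists>p q. ends e = {p,q} \<Longrightarrow> finite (\<Union>(ends ` E))"
proof -
  assume f: "finite E" and fm: "\<forall>e\<in>E. \<exists>p q. ends e = {p,q}"
  have "\<forall>e\<in>E. finite (ends e)" using fm by auto
  then show ?thesis using f by blast
qed

lemma measure_del:
  assumes f: "finite E" and fm: "\<forall>e\<in>E. \<exists>p q. ends e = {p,q}" and e: "e \<in> E" "e \<in> F"
  shows "card (E - F) + card (\<Union>(ends ` (E - F))) < card E + card (\<Union>(ends ` E))"
proof -
  have "E - F \<subset> E" using e by blast
  then have "card (E - F) < card E" using psubset_card_mono[OF f] by blast
  moreover have "card (\<Union>(ends ` (E - F))) \<le> card (\<Union>(ends ` E))"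
    using U_fin[OF f fm] by (intro card_mono) auto
  ultimately show ?thesis by simp
qed

lemma card_le_Suc_Diff1: "finite A \<Longrightarrow> card A \<le> Suc (card (A - {x}))"
  by (cases "x \<in> A") (auto simp: card_Suc_Diff1)

lemma cut_del1: "finite E \<Longrightarrow> card (cut E ends Z) \<le> Suc (card (cut (E - {e}) ends Z))"
  using card_le_Suc_Diff1[OF finite_cut, of E ends Z e] by (simp add: cut_Diff)

lemma fm_del: "\<forall>e\<in>E. \<exists>p q. ends e = {p,q} \<Longrightarrow> \<forall>e\<in>E - F. \<exists>p q. ends e = {p,q}" by blast

lemma paths_mono: "\<forall>p\<in>set P. is_path (E - F) ends a b p \<Longrightarrow> \<forall>p\<in>set P. is_path E ends a b p"
  unfolding is_path_iff using ipath_mono by blast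

lemma paths_avoid: "\<forall>p\<in>set P. is_path (E - F) ends a b p \<Longrightarrow> \<forall>p\<in>set P. set q \<subseteq> F \<longrightarrow> set q \<inter> set p = {}"
proof (intro ballI impI)
  fix p assume "\<forall>p\<in>set P. is_path (E - F) ends a b p" "p \<in> set P" "set q \<subseteq> F"
  then obtain vs where "ipath (E - F) ends vs p" unfolding is_path_iff by blast
  then have "set p \<subseteq> E - F" using ipath_edges by blast
  then show "set q \<inter> set p = {}" using \<open>set q \<subseteq> F\<close> by blast
qed

lemma add_path:
  assumes P: "length P = k" "\<forall>p\<in>set P. is_path (E - F) ends a b p" "pdisj P"
    and q: "is_path E ends a b q" "set q \<subseteq> F"
  shows "\<exists>P. length P = Suc k \<and> (\<forall>p\<in>set P. is_path E ends a b p) \<and> pdisj P"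
proof (intro exI[of _ "q # P"] conjI)
  show "length (q # P) = Suc k" using P by simp
  show "\<forall>p\<in>set (q # P). is_path E ends a b p" using paths_mono[OF P(2)] q(1) by simp
  show "pdisj (q # P)" unfolding pdisj_Cons using P(3) paths_avoid[OF P(2)] q(2) by blast
qed

lemma cut_contr1:
  "b \<notin> Z \<Longrightarrow> cut E (\<lambda>e. (\<lambda>w. if w \<in> X then w else b) ` ends e) Z = cut E ends (Z \<inter> X)"
  unfolding cut_def by (auto split: if_splits)

lemma cut_contr2:
  "a \<in> Z \<Longrightarrow> cut E (\<lambda>e. (\<lambda>w. if w \<in> X then a else w) ` ends e) Z = cut E ends (Z \<union> X)"
  unfolding cut_def by (auto split: if_splits)

lemma menger:
  "finite E \<Longrightarrow> (\<forall>e\<in>E. \<exists>p q. ends e = {p,q}) \<Longrightarrow> a \<noteq> b \<Longrightarrow>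
   (\<forall>Z. a \<in> Z \<longrightarrow> b \<notin> Z \<longrightarrow> k \<le> card (cut E ends Z)) \<Longrightarrow>
   \<exists>P. length P = k \<and> (\<forall>p\<in>set P. is_path E ends a b p) \<and> pdisj P"
proof (induction "card E + card (\<Union>(ends ` E))" arbitrary: E ends k rule: less_induct)
  case less
  note fin = less.prems(1) and fm = less.prems(2) and ab = less.prems(3) and cutk = less.prems(4)
  show ?case
  proof (cases k)
    case 0 then show ?thesis by (intro exI[of _ "[]"]) (simp add: pdisj_def)
  next
    case (Suc k')
    show ?thesis
    proof (cases "\<exists>e\<in>E. ends e = {a,b}")
      case True
      then obtain e where e: "e \<in> E" "ends e = {a,b}" by blast
      have c': "\<forall>Z. a \<in> Z \<longrightarrow> b \<notin> Z \<longrightarrow> k' \<le> card (cut (E - {e}) ends Z)"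
        using cutk cut_del1[OF fin, of ends _ e] Suc by (metis Suc_le_mono le_trans)
      obtain P where P: "length P = k'" "\<forall>p\<in>set P. is_path (E - {e}) ends a b p" "pdisj P"
        using less.hyps[OF measure_del[OF fin fm e(1), of "{e}"] _ fm_del[OF fm] ab c'] fin by auto
      have q: "is_path E ends a b [e]" unfolding is_path_iff
        by (intro exI[of _ "[a,b]"]) (simp add: ipath_def e ab)
      show ?thesis using add_path[OF P q] Suc by simp
    next
      case noab: False
      show ?thesis
      proof (cases "\<exists>e1\<in>E. \<exists>e2\<in>E. \<exists>v. v \<noteq> a \<and> v \<noteq> b \<and> ends e1 = {a,v} \<and> ends e2 = {v,b}")
        case True
        then obtain e1 e2 v where e: "e1 \<in> E" "e2 \<in> E" "v \<noteq> a" "v \<noteq> b" "ends e1 = {a,v}" "ends e2 = {v,b}"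
          by blast
        have c': "\<forall>Z. a \<in> Z \<longrightarrow> b \<notin> Z \<longrightarrow> k' \<le> card (cut (E - {e1,e2}) ends Z)"
        proof (intro allI impI)
          fix Z assume Z: "a \<in> Z" "b \<notin> Z"
          have "e1 \<notin> cut E ends Z \<or> e2 \<notin> cut E ends Z" using e Z by (auto simp: cut_def)
          then have "cut (E - {e1,e2}) ends Z = cut (E - {e1}) ends Z \<or> cut (E - {e1,e2}) ends Z = cut (E - {e2}) ends Z"
            by (auto simp: cut_Diff)
          moreover have "k \<le> Suc (card (cut (E - {e1}) ends Z))" "k \<le> Suc (card (cut (E - {e2}) ends Z))"
            using cutk Z cut_del1[OF fin, of ends Z] by (meson le_trans)+
          ultimately show "k' \<le> card (cut (E - {e1,e2}) ends Z)" using Suc by auto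
        qed
        obtain P where P: "length P = k'" "\<forall>p\<in>set P. is_path (E - {e1,e2}) ends a b p" "pdisj P"
          using less.hyps[OF measure_del[OF fin fm e(1), of "{e1,e2}"] _ fm_del[OF fm] ab c'] fin by auto
        have q: "is_path E ends a b [e1,e2]"
        proof -
          have va: "a \<noteq> v" "b \<noteq> v" using e(3,4) by auto
          show ?thesis unfolding is_path_iff by (intro exI[of _ "[a,v,b]"]) (auto simp: ipath_def e ab va nth_Cons split: nat.splits)
        qed
        show ?thesis using add_path[OF P q] Suc by simp
      next
        case no2: False
        show ?thesis
        proof (cases "\<exists>e\<in>E. \<forall>Z. a \<in> Z \<longrightarrow> b \<notin> Z \<longrightarrow> k \<le> card (cut (E - {e}) ends Z)")
          case True
          then obtain e where e: "e \<in> E" "\<forall>Z. a \<in> Z \<longrightarrow> b \<notin> Z \<longrightarrow> k \<le> card (cut (E - {e}) ends Z)" by blast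
          obtain P where P: "length P = k" "\<forall>p\<in>set P. is_path (E - {e}) ends a b p" "pdisj P"
            using less.hyps[OF measure_del[OF fin fm e(1), of "{e}"] _ fm_del[OF fm] ab e(2)] fin by auto
          then show ?thesis using paths_mono[OF P(2)] by blast
        next
          case no3: False
          show ?thesis
          proof (cases "\<exists>e\<in>E. ends e \<inter> {a,b} = {}")
            case True
            then obtain e where e: "e \<in> E" "ends e \<inter> {a,b} = {}" by blast
            obtain X where X: "a \<in> X" "b \<notin> X" "card (cut (E - {e}) ends X) < k"
              using no3 e(1) by (meson not_le)
            have ck0: "k \<le> card (cut E ends X)" using cutk[rule_format, of X] X by simp
            have ck: "card (cut E ends X) = k" using ck0 X(3) cut_del1[OF fin, of ends X e] by linarith
            have ecut: "e \<in> cut E ends X"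
            proof (rule ccontr)
              assume "e \<notin> cut E ends X"
              then have "cut (E - {e}) ends X = cut E ends X" by (auto simp: cut_Diff)
              then show False using X(3) ck by simp
            qed
            obtain u v where uv: "ends e = {u,v}" "u \<in> X" "v \<notin> X"
            proof -
              obtain p q where pq: "ends e = {p,q}" using fm e(1) by blast
              show thesis
              proof (cases "p \<in> X")
                case True
                then have "q \<notin> X" using ecut pq by (auto simp: cut_def)
                then show thesis using that[of p q] pq True by blast
              next
                case False
                then have "q \<in> X" using ecut pq by (auto simp: cut_def)
                then show thesis using that[of q p] pq False by (simp add: insert_commute)
              qed
            qed
            have ua: "u \<noteq> a" "v \<noteq> b" using e(2) uv(1) by auto
            define U where "U = \<Union>(ends ` E)"
            have Ufin: "finite U" using U_fin[OF fin fm] by (simp add: U_def)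
            have aU: "a \<in> U"
            proof -
              have "k \<le> card (cut E ends {a})" using cutk[rule_format, of "{a}"] ab by simp
              then have "cut E ends {a} \<noteq> {}" using Suc by auto
              then show ?thesis by (auto simp: cut_def U_def)
            qed
            have bU: "b \<in> U"
            proof -
              have "k \<le> card (cut E ends (- {b}))" using cutk[rule_format, of "-{b}"] ab by simp
              then have "cut E ends (- {b}) \<noteq> {}" using Suc by auto
              then show ?thesis by (auto simp: cut_def U_def)
            qed
            have uU: "u \<in> U" "v \<in> U" using e(1) uv(1) by (auto simp: U_def)
            have cardU: "card U = card (U \<inter> X) + card (U - X)"
            proof -
              have "U = (U \<inter> X) \<union> (U - X)" by blast
              then have "card U = card ((U \<inter> X) \<union> (U - X))" by simp
              also have "\<dots> = card (U \<inter> X) + card (U - X)" using Ufin by (intro card_Un_disjoint) auto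
              finally show ?thesis .
            qed
            have c2a: "2 \<le> card (U - X)"
            proof -
              have "{v,b} \<subseteq> U - X" using uU bU uv X by auto
              moreover have "card {v,b} = 2" using ua by simp
              ultimately show ?thesis using card_mono[of "U - X" "{v,b}"] Ufin by auto
            qed
            have c2b: "2 \<le> card (U \<inter> X)"
            proof -
              have "{u,a} \<subseteq> U \<inter> X" using uU aU uv X by auto
              moreover have "card {u,a} = 2" using ua by simp
              ultimately show ?thesis using card_mono[of "U \<inter> X" "{u,a}"] Ufin by auto
            qed
            define f1 where "f1 = (\<lambda>w. if w \<in> X then w else b)"
            define f2 where "f2 = (\<lambda>w. if w \<in> X then a else w)"
            define ends1 where "ends1 = (\<lambda>e. f1 ` ends e)"
            define ends2 where "ends2 = (\<lambda>e. f2 ` ends e)"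
            have U1: "\<Union>(ends1 ` E) = f1 ` U" by (auto simp: ends1_def U_def)
            have U2: "\<Union>(ends2 ` E) = f2 ` U" by (auto simp: ends2_def U_def)
            have m1: "card (f1 ` U) < card U"
            proof -
              have "f1 ` U \<subseteq> (U \<inter> X) \<union> {b}" by (auto simp: f1_def)
              then have "card (f1 ` U) \<le> card ((U \<inter> X) \<union> {b})" using Ufin by (intro card_mono) auto
              also have "\<dots> \<le> card (U \<inter> X) + 1" using card_Un_le[of "U \<inter> X" "{b}"] by simp
              finally show ?thesis using cardU c2a by linarith
            qed
            have m2: "card (f2 ` U) < card U"
            proof -
              have "f2 ` U \<subseteq> (U - X) \<union> {a}" by (auto simp: f2_def)
              then have "card (f2 ` U) \<le> card ((U - X) \<union> {a})" using Ufin by (intro card_mono) auto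
              also have "\<dots> \<le> card (U - X) + 1" using card_Un_le[of "U - X" "{a}"] by simp
              finally show ?thesis using cardU c2b by linarith
            qed
            have fm1: "\<forall>e\<in>E. \<exists>p q. ends1 e = {p,q}"
            proof
              fix e assume "e \<in> E"
              then obtain p q where "ends e = {p,q}" using fm by blast
              then show "\<exists>p q. ends1 e = {p,q}"
                by (intro exI[of _ "f1 p"] exI[of _ "f1 q"]) (simp add: ends1_def)
            qed
            have fm2: "\<forall>e\<in>E. \<exists>p q. ends2 e = {p,q}"
            proof
              fix e assume "e \<in> E"
              then obtain p q where "ends e = {p,q}" using fm by blast
              then show "\<exists>p q. ends2 e = {p,q}"
                by (intro exI[of _ "f2 p"] exI[of _ "f2 q"]) (simp add: ends2_def)
            qed
            have ck1: "\<forall>Z. a \<in> Z \<longrightarrow> b \<notin> Z \<longrightarrow> k \<le> card (cut E ends1 Z)"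
            proof (intro allI impI)
              fix Z assume Z: "a \<in> Z" "b \<notin> Z"
              have "cut E ends1 Z = cut E ends (Z \<inter> X)" using cut_contr1[OF Z(2)] by (simp add: ends1_def f1_def)
              then show "k \<le> card (cut E ends1 Z)" using cutk Z X by simp
            qed
            have ck2: "\<forall>Z. a \<in> Z \<longrightarrow> b \<notin> Z \<longrightarrow> k \<le> card (cut E ends2 Z)"
            proof (intro allI impI)
              fix Z assume Z: "a \<in> Z" "b \<notin> Z"
              have "cut E ends2 Z = cut E ends (Z \<union> X)" using cut_contr2[OF Z(1)] by (simp add: ends2_def f2_def)
              then show "k \<le> card (cut E ends2 Z)" using cutk Z X by simp
            qed
            have lt1: "card E + card (\<Union>(ends1 ` E)) < card E + card (\<Union>(ends ` E))"
              using U1 m1 by (simp add: U_def)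
            have lt2: "card E + card (\<Union>(ends2 ` E)) < card E + card (\<Union>(ends ` E))"
              using U2 m2 by (simp add: U_def)
            obtain P1 where P1: "length P1 = k" "\<forall>p\<in>set P1. is_path E ends1 a b p" "pdisj P1"
              using less.hyps[OF lt1 fin fm1 ab ck1] by blast
            obtain P2 where P2: "length P2 = k" "\<forall>p\<in>set P2. is_path E ends2 a b p" "pdisj P2"
              using less.hyps[OF lt2 fin fm2 ab ck2] by blast
            show ?thesis
              by (rule glue_all[OF fin fm X(1) X(2) ck P1(1) P1(2)[unfolded ends1_def f1_def] P1(3)
                  P2(1) P2(2)[unfolded ends2_def f2_def] P2(3)])
          next
            case no4: False
            define Z0 where "Z0 = insert a {v. \<exists>g\<in>E. ends g = {a,v}}"
            have bZ: "b \<notin> Z0" using noab ab by (auto simp: Z0_def)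
            have "cut E ends Z0 = {}"
            proof (rule ccontr)
              assume "cut E ends Z0 \<noteq> {}"
              then obtain g where g: "g \<in> E" "ends g \<inter> Z0 \<noteq> {}" "\<not> ends g \<subseteq> Z0" by (auto simp: cut_def)
              obtain p q where pq: "ends g = {p,q}" using fm g(1) by blast
              have inc: "ends g \<inter> {a,b} \<noteq> {}" using no4 g(1) by simp
              show False
              proof (cases "a \<in> ends g")
                case True
                have "ends g = {a,q} \<or> ends g = {a,p}" using pq True by (auto simp: insert_commute)
                then obtain r where r: "ends g = {a,r}" by blast
                then have "r \<in> Z0" using g(1) by (auto simp: Z0_def)
                then show False using g(3) r by (auto simp: Z0_def)
              next
                case False
                then have "b \<in> ends g" using inc by blast
                then have "ends g = {p,b} \<or> ends g = {q,b}" using pq by (auto simp: insert_commute)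
                then obtain r where r: "ends g = {r,b}" by blast
                have "r \<in> Z0" using g(2) r bZ by auto
                moreover have "r \<noteq> a" using False r by auto
                ultimately obtain g' where g': "g' \<in> E" "ends g' = {a,r}" by (auto simp: Z0_def)
                have "r \<noteq> b" using noab g' by auto
                then have "\<exists>e1\<in>E. \<exists>e2\<in>E. \<exists>v. v \<noteq> a \<and> v \<noteq> b \<and> ends e1 = {a,v} \<and> ends e2 = {v,b}"
                  using g'(1) g(1) g'(2) r \<open>r \<noteq> a\<close> by blast
                with no2 show False by contradiction
              qed
            qed
            then have "k \<le> 0" using cutk bZ by (auto simp: Z0_def)
            then show ?thesis using Suc by simp
          qed
        qed
      qed
    qed
  qed
qed

lemma card_sum: "finite E \<Longrightarrow> card {e\<in>E. P e} = (\<Sum>e\<in>E. if P e then 1 else 0 :: nat)"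
  by (simp add: sum.If_cases Int_def)

definition cr :: "'v set \<Rightarrow> 'v set \<Rightarrow> nat" where
  "cr F Z = (if F \<inter> Z \<noteq> {} \<and> \<not> F \<subseteq> Z then 1 else 0)"

lemma dc_sum: "finite E \<Longrightarrow> card (cut E ends Z) = (\<Sum>e\<in>E. cr (ends e) Z)"
  unfolding cut_def cr_def by (rule card_sum)

definition hh :: "'e set \<Rightarrow> ('e \<Rightarrow> 'v set) \<Rightarrow> 'v set \<Rightarrow> 'v set \<Rightarrow> nat" where
  "hh E ends X Y = card {e\<in>E. ends e \<inter> (X \<inter> Y) \<noteq> {} \<and> \<not> ends e \<subseteq> X \<union> Y}"

definition hi :: "'v set \<Rightarrow> 'v set \<Rightarrow> 'v set \<Rightarrow> nat" where
  "hi F X Y = (if F \<inter> (X \<inter> Y) \<noteq> {} \<and> \<not> F \<subseteq> X \<union> Y then 1 else 0)"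

lemma hh_sum: "finite E \<Longrightarrow> hh E ends X Y = (\<Sum>e\<in>E. hi (ends e) X Y)"
  unfolding hh_def hi_def by (rule card_sum)

lemma cr_pq: "cr {p,q} Z = (if (p \<in> Z) = (q \<in> Z) then 0 else 1)"
  unfolding cr_def by auto

lemma hi_pq: "hi {p,q} X Y = (if (p \<in> X \<and> p \<in> Y \<and> \<not>(q \<in> X \<or> q \<in> Y)) \<or> (q \<in> X \<and> q \<in> Y \<and> \<not>(p \<in> X \<or> p \<in> Y)) then 1 else 0)"
  unfolding hi_def by auto

lemma subm_pw: "cr {p,q} (X \<inter> Y) + cr {p,q} (X \<union> Y) \<le> cr {p,q} X + cr {p,q} Y"
  unfolding cr_pq by (cases "p \<in> X"; cases "p \<in> Y"; cases "q \<in> X"; cases "q \<in> Y") simp_all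

lemma posi_pw: "cr {p,q} X + cr {p,q} Y = cr {p,q} (X - Y) + cr {p,q} (Y - X) + 2 * hi {p,q} X Y"
  unfolding cr_pq hi_pq by (cases "p \<in> X"; cases "p \<in> Y"; cases "q \<in> X"; cases "q \<in> Y") simp_all

lemma tri_pw: "cr {p,q} (X \<union> Y \<union> Z) + cr {p,q} X + cr {p,q} Y + cr {p,q} Z \<le>
   cr {p,q} ((X - Y) \<union> (Z - Y)) + cr {p,q} ((X - Z) \<union> (Y - Z)) + cr {p,q} ((Y - X) \<union> (Z - X))
   + 2 * (hi {p,q} X Y + hi {p,q} X Z + hi {p,q} Y Z)"
  unfolding cr_pq hi_pq
  by (cases "p \<in> X"; cases "p \<in> Y"; cases "p \<in> Z"; cases "q \<in> X"; cases "q \<in> Y"; cases "q \<in> Z") simp_all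

context
  fixes E :: "'e set" and ends :: "'e \<Rightarrow> 'v set"
  assumes fin: "finite E" and fm: "\<forall>e\<in>E. \<exists>p q. ends e = {p,q}"
begin

lemma subm: "card (cut E ends (X \<inter> Y)) + card (cut E ends (X \<union> Y)) \<le> card (cut E ends X) + card (cut E ends Y)"
proof -
  have "(\<Sum>e\<in>E. cr (ends e) (X \<inter> Y) + cr (ends e) (X \<union> Y)) \<le> (\<Sum>e\<in>E. cr (ends e) X + cr (ends e) Y)"
  proof (rule sum_mono)
    fix e assume "e \<in> E"
    then obtain p q where "ends e = {p,q}" using fm by blast
    then show "cr (ends e) (X \<inter> Y) + cr (ends e) (X \<union> Y) \<le> cr (ends e) X + cr (ends e) Y"
      using subm_pw by simp
  qed
  then show ?thesis by (simp add: dc_sum[OF fin] sum.distrib)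
qed

lemma posi: "card (cut E ends X) + card (cut E ends Y) = card (cut E ends (X - Y)) + card (cut E ends (Y - X)) + 2 * hh E ends X Y"
proof -
  have "(\<Sum>e\<in>E. cr (ends e) X + cr (ends e) Y) = (\<Sum>e\<in>E. cr (ends e) (X - Y) + cr (ends e) (Y - X) + 2 * hi (ends e) X Y)"
  proof (rule sum.cong)
    fix e assume "e \<in> E"
    then obtain p q where "ends e = {p,q}" using fm by blast
    then show "cr (ends e) X + cr (ends e) Y = cr (ends e) (X - Y) + cr (ends e) (Y - X) + 2 * hi (ends e) X Y"
      using posi_pw by simp
  qed simp
  then show ?thesis by (simp add: dc_sum[OF fin] hh_sum[OF fin] sum.distrib sum_distrib_left)
qed

lemma tri: "card (cut E ends (X \<union> Y \<union> Z)) + card (cut E ends X) + card (cut E ends Y) + card (cut E ends Z) \<le>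
   card (cut E ends ((X - Y) \<union> (Z - Y))) + card (cut E ends ((X - Z) \<union> (Y - Z))) + card (cut E ends ((Y - X) \<union> (Z - X)))
   + 2 * (hh E ends X Y + hh E ends X Z + hh E ends Y Z)"
proof -
  have "(\<Sum>e\<in>E. cr (ends e) (X \<union> Y \<union> Z) + cr (ends e) X + cr (ends e) Y + cr (ends e) Z) \<le>
     (\<Sum>e\<in>E. cr (ends e) ((X - Y) \<union> (Z - Y)) + cr (ends e) ((X - Z) \<union> (Y - Z)) + cr (ends e) ((Y - X) \<union> (Z - X))
      + 2 * (hi (ends e) X Y + hi (ends e) X Z + hi (ends e) Y Z))"
  proof (rule sum_mono)
    fix e assume "e \<in> E"
    then obtain p q where "ends e = {p,q}" using fm by blast
    then show "cr (ends e) (X \<union> Y \<union> Z) + cr (ends e) X + cr (ends e) Y + cr (ends e) Z \<le>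
     cr (ends e) ((X - Y) \<union> (Z - Y)) + cr (ends e) ((X - Z) \<union> (Y - Z)) + cr (ends e) ((Y - X) \<union> (Z - X))
      + 2 * (hi (ends e) X Y + hi (ends e) X Z + hi (ends e) Y Z)"
      using tri_pw by simp
  qed
  then show ?thesis by (simp add: dc_sum[OF fin] hh_sum[OF fin] sum.distrib sum_distrib_left)
qed

end

lemma cut_compl: "\<forall>g\<in>E. ends g \<subseteq> V \<Longrightarrow> cut E ends (V - Z) = cut E ends Z"
  unfolding cut_def by blast

lemma cut_int: "\<forall>g\<in>E. ends g \<subseteq> V \<Longrightarrow> cut E ends (Z \<inter> V) = cut E ends Z"
  unfolding cut_def by blast

lemma ec_ge_cut: "finite E \<Longrightarrow> (\<forall>e\<in>E. \<exists>p q. ends e = {p,q}) \<Longrightarrow> a \<noteq> b \<Longrightarrow>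
   (\<forall>Z. a \<in> Z \<longrightarrow> b \<notin> Z \<longrightarrow> k \<le> card (cut E ends Z)) \<Longrightarrow> k \<le> edge_conn E ends a b"
proof -
  assume f: "finite E" and fm: "\<forall>e\<in>E. \<exists>p q. ends e = {p,q}" and ab: "a \<noteq> b"
    and c: "\<forall>Z. a \<in> Z \<longrightarrow> b \<notin> Z \<longrightarrow> k \<le> card (cut E ends Z)"
  obtain P where "length P = k" "\<forall>p\<in>set P. is_path E ends a b p" "pdisj P"
    using menger[OF f fm ab c] by blast
  then show ?thesis using ec_ge[OF f ab] by blast
qed

locale LG =
  fixes V :: "'v set" and E :: "'e set" and ends :: "'e \<Rightarrow> 'v set" and s :: 'v and A :: "'v set" and l :: nat
  assumes G: "multigraph V E ends"
    and l4: "l \<ge> 4"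
    and sV: "s \<in> V"
    and AV: "A \<subset> V" and sA: "s \<notin> A"
    and conn: "\<forall>x\<in>A. \<forall>y\<in>A. x \<noteq> y \<longrightarrow> edge_conn E ends x y \<ge> l"
    and noout: "\<forall>e\<in>E. ends e \<inter> A \<noteq> {}"
begin

definition "S = {e\<in>E. s \<in> ends e}"
definition "oe e = other_end ends s e"
definition "dc Z = card (cut E ends Z)"
definition "ds Z = card {e\<in>S. oe e \<in> Z}"
definition "sepA Z \<longleftrightarrow> Z \<inter> A \<noteq> {} \<and> \<not> A \<subseteq> Z"
definition "dang Z \<longleftrightarrow> Z \<subseteq> V - {s} \<and> sepA Z \<and> dc Z \<le> l + 1"

lemma finE: "finite E" using G by (simp add: multigraph_def)
lemma finV: "finite V" using G by (simp add: multigraph_def)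
lemma endsV: "\<forall>g\<in>E. ends g \<subseteq> V" using G by (simp add: multigraph_def)
lemma fm: "\<forall>e\<in>E. \<exists>p q. ends e = {p,q}"
proof
  fix e assume "e \<in> E"
  then have "card (ends e) = 2" using G by (simp add: multigraph_def)
  then show "\<exists>p q. ends e = {p,q}" by (auto simp: card_2_iff)
qed
lemma finS: "finite S" using finE by (simp add: S_def)
lemma A_sub: "A \<subseteq> V - {s}" using AV sA by auto

lemma S_ends: assumes "e \<in> S" shows "ends e = {s, oe e}" "oe e \<noteq> s" "oe e \<in> A" "oe e \<in> V" "e \<in> E"
proof -
  have eE: "e \<in> E" and se: "s \<in> ends e" using assms by (auto simp: S_def)
  have "card (ends e) = 2" using G eE by (simp add: multigraph_def)
  then obtain x y where xy: "ends e = {x,y}" "x \<noteq> y" by (auto simp: card_2_iff)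
  obtain z where z: "ends e = {s,z}" "z \<noteq> s" using xy se by auto
  then have "ends e - {s} = {z}" by auto
  then have oz: "oe e = z" by (simp add: oe_def other_end_def)
  show "ends e = {s, oe e}" "oe e \<noteq> s" using z oz by auto
  have "ends e \<inter> A \<noteq> {}" using noout eE by blast
  then show "oe e \<in> A" using z oz sA by auto
  show "oe e \<in> V" using endsV eE z oz by auto
  show "e \<in> E" by (rule eE)
qed

lemma cut_ge: "sepA Z \<Longrightarrow> l \<le> dc Z"
proof -
  assume "sepA Z"
  then obtain x y where xy: "x \<in> Z" "x \<in> A" "y \<in> A" "y \<notin> Z" by (auto simp: sepA_def)
  then have "x \<noteq> y" by auto
  then have "l \<le> edge_conn E ends x y" using conn xy by blast
  also have "\<dots> \<le> dc Z" using ec_le[OF finE xy(1) xy(4)] by (simp add: dc_def)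
  finally show ?thesis .
qed

lemma deg_id: assumes W: "W \<subseteq> V - {s}"
  shows "dc (V - {s} - W) + 2 * ds W = dc W + card S"
proof -
  have "V - {s} - W = V - insert s W" by blast
  then have "dc (V - {s} - W) = dc (V - insert s W)" by simp
  also have "\<dots> = dc (insert s W)" unfolding dc_def by (rule arg_cong[OF cut_compl[OF endsV]])
  finally have e1: "dc (V - {s} - W) = dc (insert s W)" .
  have "(\<Sum>e\<in>E. cr (ends e) (insert s W) + 2 * (if e \<in> S \<and> oe e \<in> W then 1 else 0)) =
        (\<Sum>e\<in>E. cr (ends e) W + (if e \<in> S then 1 else 0))"
  proof (rule sum.cong)
    fix e assume eE: "e \<in> E"
    show "cr (ends e) (insert s W) + 2 * (if e \<in> S \<and> oe e \<in> W then 1 else 0) = cr (ends e) W + (if e \<in> S then 1 else 0)"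
    proof (cases "e \<in> S")
      case True
      then have "ends e = {s, oe e}" "oe e \<noteq> s" using S_ends by auto
      moreover have "s \<notin> W" using W by auto
      ultimately show ?thesis using True by (auto simp: cr_pq)
    next
      case False
      then have "s \<notin> ends e" using eE by (auto simp: S_def)
      then have "ends e \<inter> insert s W = ends e \<inter> W" "(ends e \<subseteq> insert s W) = (ends e \<subseteq> W)" by auto
      then show ?thesis using False by (simp add: cr_def)
    qed
  qed simp
  moreover have "ds W = (\<Sum>e\<in>E. if e \<in> S \<and> oe e \<in> W then 1 else 0)"
  proof -
    have "{e\<in>S. oe e \<in> W} = {e\<in>E. e \<in> S \<and> oe e \<in> W}" by (auto simp: S_def)
    then show ?thesis using card_sum[OF finE] by (simp add: ds_def)
  qed
  moreover have "card S = (\<Sum>e\<in>E. if e \<in> S then 1 else 0)"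
  proof -
    have "S = {e\<in>E. e \<in> S}" by (auto simp: S_def)
    then show ?thesis using card_sum[OF finE, of "\<lambda>e. e \<in> S"] by simp
  qed
  ultimately show ?thesis using e1 by (simp add: dc_def dc_sum[OF finE] sum.distrib sum_distrib_left)
qed

lemma lift_fs: "fst (lift_edges E ends s e f) = E - {f}" "snd (lift_edges E ends s e f) = ends(e := {oe e, oe f})"
  by (simp_all add: lift_edges_def oe_def)

lemma lift_sum:
  assumes e: "e \<in> S" and f: "f \<in> S" and ef: "e \<noteq> f"
  shows "card (cut (E - {f}) (ends(e := {oe e, oe f})) Z) + cr (ends e) Z + cr (ends f) Z = dc Z + cr {oe e, oe f} Z"
proof -
  let ?e' = "ends(e := {oe e, oe f})"
  have eE: "e \<in> E" and fE: "f \<in> E" using e f by (auto simp: S_def)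
  have fin1: "finite (E - {f})" using finE by simp
  have e1: "e \<in> E - {f}" using eE ef by simp
  have "dc Z = cr (ends f) Z + (\<Sum>g\<in>E - {f}. cr (ends g) Z)"
    by (simp add: dc_def dc_sum[OF finE] sum.remove[OF finE fE])
  moreover have "(\<Sum>g\<in>E - {f}. cr (ends g) Z) = cr (ends e) Z + (\<Sum>g\<in>E - {f} - {e}. cr (ends g) Z)"
    by (rule sum.remove[OF fin1 e1])
  moreover have "(\<Sum>g\<in>E - {f}. cr (?e' g) Z) = cr (?e' e) Z + (\<Sum>g\<in>E - {f} - {e}. cr (?e' g) Z)"
    by (rule sum.remove[OF fin1 e1])
  moreover have "(\<Sum>g\<in>E - {f} - {e}. cr (?e' g) Z) = (\<Sum>g\<in>E - {f} - {e}. cr (ends g) Z)"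
    by (rule sum.cong) auto
  moreover have "card (cut (E - {f}) ?e' Z) = (\<Sum>g\<in>E - {f}. cr (?e' g) Z)" by (rule dc_sum[OF fin1])
  ultimately show ?thesis by simp
qed

lemma lift_cut:
  assumes e: "e \<in> S" and f: "f \<in> S" and ef: "e \<noteq> f" and sZ: "s \<notin> Z"
  shows "oe e \<in> Z \<and> oe f \<in> Z \<Longrightarrow> card (cut (E - {f}) (ends(e := {oe e, oe f})) Z) + 2 = dc Z"
    and "\<not> (oe e \<in> Z \<and> oe f \<in> Z) \<Longrightarrow> card (cut (E - {f}) (ends(e := {oe e, oe f})) Z) = dc Z"
proof -
  have c1: "cr (ends e) Z = (if oe e \<in> Z then 1 else 0)" using S_ends[OF e] sZ by (simp add: cr_pq)
  have c2: "cr (ends f) Z = (if oe f \<in> Z then 1 else 0)" using S_ends[OF f] sZ by (simp add: cr_pq)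
  note L = lift_sum[OF e f ef, of Z]
  show "oe e \<in> Z \<and> oe f \<in> Z \<Longrightarrow> card (cut (E - {f}) (ends(e := {oe e, oe f})) Z) + 2 = dc Z"
    using L c1 c2 by (simp add: cr_pq)
  show "\<not> (oe e \<in> Z \<and> oe f \<in> Z) \<Longrightarrow> card (cut (E - {f}) (ends(e := {oe e, oe f})) Z) = dc Z"
    using L c1 c2 by (auto simp: cr_pq split: if_splits)
qed

lemma NA_rev:
  assumes e: "e \<in> S" and f: "f \<in> S" and Z: "dang Z" and ez: "oe e \<in> Z" and fz: "oe f \<in> Z"
  shows "\<not> lift_adm V E ends s A l e f"
proof
  assume adm: "lift_adm V E ends s A l e f"
  have ef: "e \<noteq> f" using adm by (simp add: lift_adm_def)
  obtain x y where xy: "x \<in> Z" "x \<in> A" "y \<in> A" "y \<notin> Z" using Z by (auto simp: dang_def sepA_def)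
  have xyV: "x \<in> V - {s}" "y \<in> V - {s}" "x \<noteq> y" using xy A_sub by auto
  have "tau A l x y \<le> edge_conn (E - {f}) (ends(e := {oe e, oe f})) x y"
    using adm xyV unfolding lift_adm_def lift_fs by blast
  then have "l \<le> edge_conn (E - {f}) (ends(e := {oe e, oe f})) x y" using xy by (simp add: tau_def)
  also have "\<dots> \<le> card (cut (E - {f}) (ends(e := {oe e, oe f})) Z)"
    using ec_le[of "E - {f}" x Z y] finE xy by simp
  finally have "l + 2 \<le> dc Z" using lift_cut(1)[OF e f ef, of Z] Z ez fz by (auto simp: dang_def)
  then show False using Z by (simp add: dang_def)
qed

lemma NA:
  assumes e: "e \<in> S" and f: "f \<in> S" and ef: "e \<noteq> f" and na: "\<not> lift_adm V E ends s A l e f"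
  shows "\<exists>Z. dang Z \<and> oe e \<in> Z \<and> oe f \<in> Z"
proof -
  let ?E' = "E - {f}" and ?n' = "ends(e := {oe e, oe f})"
  have eE: "e \<in> E" "s \<in> ends e" and fE: "f \<in> E" "s \<in> ends f" using e f by (auto simp: S_def)
  obtain x y where xy: "x \<in> V - {s}" "y \<in> V - {s}" "x \<noteq> y" "\<not> tau A l x y \<le> edge_conn ?E' ?n' x y"
    using na eE fE ef unfolding lift_adm_def lift_fs by blast
  then have xyA: "x \<in> A" "y \<in> A" and lt: "edge_conn ?E' ?n' x y < l" by (auto simp: tau_def split: if_splits)
  have fin': "finite ?E'" using finE by simp
  have fm': "\<forall>g\<in>?E'. \<exists>p q. ?n' g = {p,q}" using fm by auto
  have V': "\<forall>g\<in>?E'. ?n' g \<subseteq> V" using endsV S_ends(4)[OF e] S_ends(4)[OF f] by auto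
  obtain Z where Z: "x \<in> Z" "y \<notin> Z" "card (cut ?E' ?n' Z) < l"
    using ec_ge_cut[OF fin' fm' xy(3), of l] lt by (meson not_le)
  define Z0 where "Z0 = (if s \<in> Z then V - Z else Z \<inter> V)"
  have Z0s: "Z0 \<subseteq> V - {s}" by (auto simp: Z0_def)
  have cZ0: "cut ?E' ?n' Z0 = cut ?E' ?n' Z"
  proof (cases "s \<in> Z")
    case True
    then have "Z0 = V - Z" by (simp add: Z0_def)
    then show ?thesis by (simp only: cut_compl[OF V'])
  next
    case False
    then have "Z0 = Z \<inter> V" by (simp add: Z0_def)
    then show ?thesis by (simp only: cut_int[OF V'])
  qed
  have sep: "sepA Z0"
  proof (cases "s \<in> Z")
    case True
    then have "y \<in> Z0" "x \<notin> Z0" using Z xy by (auto simp: Z0_def)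
    then show ?thesis using xyA by (auto simp: sepA_def)
  next
    case False
    then have "x \<in> Z0" "y \<notin> Z0" using Z xy by (auto simp: Z0_def)
    then show ?thesis using xyA by (auto simp: sepA_def)
  qed
  have ge: "l \<le> dc Z0" by (rule cut_ge[OF sep])
  have sZ0: "s \<notin> Z0" using Z0s by auto
  have both: "oe e \<in> Z0 \<and> oe f \<in> Z0"
  proof (rule ccontr)
    assume "\<not> (oe e \<in> Z0 \<and> oe f \<in> Z0)"
    then have "card (cut ?E' ?n' Z0) = dc Z0" by (rule lift_cut(2)[OF e f ef sZ0])
    then show False using ge Z(3) cZ0 by simp
  qed
  then have "card (cut ?E' ?n' Z0) + 2 = dc Z0" by (rule lift_cut(1)[OF e f ef sZ0])
  then have "dang Z0" using Z0s sep Z(3) cZ0 by (simp add: dang_def)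
  then show ?thesis using both by blast
qed

lemma hh_ge1: assumes g: "g \<in> S" "oe g \<in> X" "oe g \<in> Y" and sXY: "s \<notin> X \<union> Y"
  shows "1 \<le> hh E ends X Y"
proof -
  define H where "H = {e\<in>E. ends e \<inter> (X \<inter> Y) \<noteq> {} \<and> \<not> ends e \<subseteq> X \<union> Y}"
  have "g \<in> H" using S_ends[OF g(1)] g sXY by (auto simp: H_def)
  then have "H \<noteq> {}" by blast
  moreover have "finite H" using finE by (simp add: H_def)
  ultimately have "0 < card H" by (simp add: card_gt_0_iff)
  then show ?thesis unfolding hh_def H_def[symmetric] by simp
qed

lemma sep_cases: assumes "sepA X" "sepA Y" "a \<in> X" "a \<in> Y" "a \<in> A"
  shows "(\<not> A \<subseteq> X \<union> Y \<and> sepA (X \<inter> Y) \<and> sepA (X \<union> Y)) \<or> (A \<subseteq> X \<union> Y \<and> sepA (X - Y) \<and> sepA (Y - X))"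
proof (cases "A \<subseteq> X \<union> Y")
  case True
  have "\<not> A \<subseteq> X" "\<not> A \<subseteq> Y" using assms(1,2) by (auto simp: sepA_def)
  then have "(X - Y) \<inter> A \<noteq> {}" "(Y - X) \<inter> A \<noteq> {}" using True by auto
  moreover have "\<not> A \<subseteq> X - Y" "\<not> A \<subseteq> Y - X" using assms(3-5) by auto
  ultimately show ?thesis using True by (simp add: sepA_def)
next
  case False
  then have "\<not> A \<subseteq> X \<inter> Y" by auto
  moreover have "(X \<inter> Y) \<inter> A \<noteq> {}" "(X \<union> Y) \<inter> A \<noteq> {}" using assms(3-5) by auto
  ultimately show ?thesis using False by (simp add: sepA_def)
qed

lemma L1:
  assumes PV: "P \<subseteq> V - {s}" and QV: "Q \<subseteq> V - {s}" and sP: "sepA P" and sQ: "sepA Q"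
    and g: "g \<in> S" "oe g \<in> P" "oe g \<in> Q" and le: "dc P + dc Q \<le> 2 * l + 1"
  shows "sepA (P \<union> Q) \<and> dc (P \<union> Q) + l \<le> dc P + dc Q"
proof -
  have gA: "oe g \<in> A" using S_ends[OF g(1)] by simp
  have sPQ: "s \<notin> P \<union> Q" using PV QV by auto
  note C = sep_cases[OF sP sQ g(2) g(3) gA]
  show ?thesis
  proof (cases "A \<subseteq> P \<union> Q")
    case True
    then have "sepA (P - Q)" "sepA (Q - P)" using C by auto
    then have "l \<le> dc (P - Q)" "l \<le> dc (Q - P)" using cut_ge by auto
    moreover have "1 \<le> hh E ends P Q" by (rule hh_ge1[OF g sPQ])
    moreover have "dc P + dc Q = dc (P - Q) + dc (Q - P) + 2 * hh E ends P Q"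
      unfolding dc_def by (rule posi[OF finE fm])
    ultimately show ?thesis using le by linarith
  next
    case False
    then have "sepA (P \<inter> Q)" "sepA (P \<union> Q)" using C by auto
    then have "l \<le> dc (P \<inter> Q)" using cut_ge by auto
    moreover have "dc (P \<inter> Q) + dc (P \<union> Q) \<le> dc P + dc Q" unfolding dc_def by (rule subm[OF finE fm])
    ultimately show ?thesis using \<open>sepA (P \<union> Q)\<close> by linarith
  qed
qed

lemma PAIR:
  assumes X: "dang X" and Y: "dang Y" and g: "g \<in> S" "oe g \<in> X" "oe g \<in> Y"
    and u: "u \<in> X" "u \<notin> Y" "u \<in> A" and w: "w \<in> Y" "w \<notin> X" "w \<in> A"
  shows "dc (X - Y) = l \<and> dc (Y - X) = l \<and> hh E ends X Y = 1 \<and> sepA (X - Y) \<and> sepA (Y - X) \<and>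
         dc X = l + 1 \<and> dc Y = l + 1"
proof -
  have gA: "oe g \<in> A" using S_ends[OF g(1)] by simp
  have s1: "sepA (X - Y)" using u g gA by (auto simp: sepA_def)
  have s2: "sepA (Y - X)" using w g gA by (auto simp: sepA_def)
  have sXY: "s \<notin> X \<union> Y" using X Y by (auto simp: dang_def)
  have "l \<le> dc (X - Y)" "l \<le> dc (Y - X)" using cut_ge s1 s2 by auto
  moreover have "1 \<le> hh E ends X Y" by (rule hh_ge1[OF g sXY])
  moreover have "dc X + dc Y = dc (X - Y) + dc (Y - X) + 2 * hh E ends X Y"
    unfolding dc_def by (rule posi[OF finE fm])
  moreover have "dc X \<le> l + 1" "dc Y \<le> l + 1" using X Y by (auto simp: dang_def)
  ultimately show ?thesis using s1 s2 by linarith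
qed

lemma T3:
  assumes X1: "dang X1" and X2: "dang X2" and X3: "dang X3"
    and g: "g1 \<in> S" "g2 \<in> S" "g3 \<in> S"
    and a1: "oe g1 \<in> X2" "oe g1 \<in> X3" "oe g1 \<notin> X1"
    and a2: "oe g2 \<in> X1" "oe g2 \<in> X3" "oe g2 \<notin> X2"
    and a3: "oe g3 \<in> X1" "oe g3 \<in> X2" "oe g3 \<notin> X3"
    and d4: "4 \<le> card S"
  shows False
proof -
  have A1: "oe g1 \<in> A" "oe g2 \<in> A" "oe g3 \<in> A" using S_ends g by auto
  have V1: "X1 \<subseteq> V - {s}" "X2 \<subseteq> V - {s}" "X3 \<subseteq> V - {s}" using X1 X2 X3 by (auto simp: dang_def)
  note P31 = PAIR[OF X3 X1 g(2) a2(2) a2(1) a1(2) a1(3) A1(1) a3(1) a3(3) A1(3)]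
  note P32 = PAIR[OF X3 X2 g(1) a1(2) a1(1) a2(2) a2(3) A1(2) a3(2) a3(3) A1(3)]
  note P12 = PAIR[OF X1 X2 g(3) a3(1) a3(2) a2(1) a2(3) A1(2) a1(1) a1(3) A1(1)]
  have K1: "dc ((X3 - X1) \<union> (X2 - X1)) \<le> l"
    using L1[of "X3 - X1" "X2 - X1" g1] V1 P31 P12 g(1) a1 by auto
  have K2: "dc ((X3 - X2) \<union> (X1 - X2)) \<le> l"
    using L1[of "X3 - X2" "X1 - X2" g2] V1 P32 P12 g(2) a2 by auto
  have K3: "dc ((X1 - X3) \<union> (X2 - X3)) \<le> l"
    using L1[of "X1 - X3" "X2 - X3" g3] V1 P31 P32 g(3) a3 by auto
  have T: "dc (X3 \<union> X1 \<union> X2) + dc X3 + dc X1 + dc X2 \<le>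
     dc ((X3 - X1) \<union> (X2 - X1)) + dc ((X3 - X2) \<union> (X1 - X2)) + dc ((X1 - X3) \<union> (X2 - X3))
     + 2 * (hh E ends X3 X1 + hh E ends X3 X2 + hh E ends X1 X2)"
    unfolding dc_def by (rule tri[OF finE fm])
  have hs: "hh E ends X3 X1 = 1" "hh E ends X3 X2 = 1" "hh E ends X1 X2 = 1"
    "dc X1 = l + 1" "dc X2 = l + 1" "dc X3 = l + 1" using P31 P32 P12 by auto
  have U3: "dc (X3 \<union> X1 \<union> X2) \<le> 3" using T K1 K2 K3 unfolding hs by (simp add: algebra_simps)
  define U where "U = X3 \<union> X1 \<union> X2"
  have UV: "U \<subseteq> V - {s}" using V1 by (auto simp: U_def)
  show False
  proof (cases "sepA U")
    case True
    then have "l \<le> dc U" by (rule cut_ge)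
    then show False using U3 l4 by (simp add: U_def)
  next
    case False
    moreover have "U \<inter> A \<noteq> {}" using a1 A1 by (auto simp: U_def)
    ultimately have AU: "A \<subseteq> U" by (simp add: sepA_def)
    have "S \<subseteq> cut E ends U"
    proof
      fix g assume gS: "g \<in> S"
      then have "ends g = {s, oe g}" "oe g \<in> A" "g \<in> E" using S_ends by auto
      then show "g \<in> cut E ends U" using AU UV by (auto simp: cut_def)
    qed
    then have "card S \<le> dc U" unfolding dc_def by (rule card_mono[OF finite_cut[OF finE]])
    then show False using U3 d4 by (simp add: U_def)
  qed
qed

lemma COV:
  assumes IS: "I \<subseteq> S" and ind: "\<forall>e\<in>I. \<forall>f\<in>I. \<not> lift_adm V E ends s A l e f" and d4: "4 \<le> card S"
  shows "R \<subseteq> I \<Longrightarrow> 2 \<le> card R \<Longrightarrow> \<exists>Z. dang Z \<and> (\<forall>g\<in>R. oe g \<in> Z)"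
proof (induction "card R" arbitrary: R rule: less_induct)
  case less
  have RS: "R \<subseteq> S" using less.prems(1) IS by blast
  have finR: "finite R" using finite_subset[OF RS finS] .
  show ?case
  proof (cases "card R = 2")
    case True
    then obtain e f where ef: "R = {e,f}" "e \<noteq> f" by (auto simp: card_2_iff)
    have "e \<in> I" "f \<in> I" using ef less.prems(1) by auto
    then have "\<not> lift_adm V E ends s A l e f" using ind by blast
    then obtain Z where "dang Z" "oe e \<in> Z" "oe f \<in> Z" using NA[of e f] ef RS by auto
    then show ?thesis using ef by auto
  next
    case False
    then have c3: "3 \<le> card R" using less.prems(2) by simp
    then have "R \<noteq> {}" by auto
    then obtain e1 where e1: "e1 \<in> R" by blast
    have ce1: "card (R - {e1}) = card R - 1" using e1 finR by simp
    have "R - {e1} \<noteq> {}"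
    proof
      assume H: "R - {e1} = {}" have "card (R - {e1}) = 0" unfolding H by simp
      then show False using ce1 c3 by linarith
    qed
    then obtain e2 where e2: "e2 \<in> R" "e2 \<noteq> e1" by blast
    have ce2: "card (R - {e1} - {e2}) = card R - 2" using e1 e2 finR by simp
    have "R - {e1} - {e2} \<noteq> {}"
    proof
      assume H: "R - {e1} - {e2} = {}" have "card (R - {e1} - {e2}) = 0" unfolding H by simp
      then show False using ce2 c3 by linarith
    qed
    then obtain e3 where e3: "e3 \<in> R" "e3 \<noteq> e1" "e3 \<noteq> e2" by blast
    have IH: "\<exists>Z. dang Z \<and> (\<forall>g\<in>R - {x}. oe g \<in> Z)" if x: "x \<in> R" for x
    proof -
      have cx: "card (R - {x}) = card R - 1" using x finR by simp
      show ?thesis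
        by (rule less.hyps[of "R - {x}"]) (use cx c3 less.prems(1) in auto)
    qed
    obtain Z1 where Z1: "dang Z1" "\<forall>g\<in>R - {e1}. oe g \<in> Z1" using IH[OF e1] by blast
    obtain Z2 where Z2: "dang Z2" "\<forall>g\<in>R - {e2}. oe g \<in> Z2" using IH[OF e2(1)] by blast
    obtain Z3 where Z3: "dang Z3" "\<forall>g\<in>R - {e3}. oe g \<in> Z3" using IH[OF e3(1)] by blast
    show ?thesis
    proof (cases "oe e1 \<in> Z1 \<or> oe e2 \<in> Z2 \<or> oe e3 \<in> Z3")
      case True
      then show ?thesis
      proof (elim disjE)
        assume "oe e1 \<in> Z1" then show ?thesis using Z1 by (metis insert_Diff insert_iff e1)
      next
        assume "oe e2 \<in> Z2" then show ?thesis using Z2 by (metis insert_Diff insert_iff e2(1))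
      next
        assume "oe e3 \<in> Z3" then show ?thesis using Z3 by (metis insert_Diff insert_iff e3(1))
      qed
    next
      case False
      have g: "e1 \<in> S" "e2 \<in> S" "e3 \<in> S" using e1 e2 e3 RS by auto
      show ?thesis
        by (rule FalseE, rule T3[OF Z1(1) Z2(1) Z3(1) g _ _ _ _ _ _ _ _ _ d4])
           (use False Z1 Z2 Z3 e1 e2 e3 in auto)
    qed
  qed
qed

lemma struct_main:
  assumes indep: "\<exists>I. I \<subseteq> S \<and> card I = (card S + 1) div 2 \<and> (\<forall>e\<in>I. \<forall>f\<in>I. \<not> lift_adm V E ends s A l e f)"
    and odd: "odd (card S)" and d5: "card S \<ge> 5"
  shows "(\<exists>X Y. X \<inter> Y = {} \<and> X \<union> Y = S \<and>
            card X = (card S + 1) div 2 \<and> card Y = (card S - 1) div 2 \<and>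
            (\<forall>e\<in>S. \<forall>f\<in>S. lift_adm V E ends s A l e f \<longleftrightarrow> (e \<in> X \<and> f \<in> Y \<or> e \<in> Y \<and> f \<in> X)))
       \<or> (\<exists>z X Y. z \<notin> X \<and> z \<notin> Y \<and> X \<inter> Y = {} \<and> insert z (X \<union> Y) = S \<and>
            card X = card Y \<and>
            (\<forall>e\<in>S. \<forall>f\<in>S. lift_adm V E ends s A l e f \<longleftrightarrow> (e \<in> X \<and> f \<in> Y \<or> e \<in> Y \<and> f \<in> X)))"
proof -
  define d where "d = card S"
  define m where "m = (d + 1) div 2"
  obtain k where k: "d = 2 * k + 1" using odd by (auto simp: d_def elim: oddE)
  have m_k: "m = k + 1" using k by (simp add: m_def)
  have m3: "3 \<le> m" using d5 k m_k by (simp add: d_def)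
  have dm: "d = 2 * m - 1" using k m_k by simp
  have d4: "4 \<le> card S" using d5 by simp
  obtain I where I: "I \<subseteq> S" "card I = m" "\<forall>e\<in>I. \<forall>f\<in>I. \<not> lift_adm V E ends s A l e f"
    using indep by (auto simp: m_def d_def)
  obtain X0 where X0: "dang X0" "\<forall>g\<in>I. oe g \<in> X0"
    using COV[OF I(1) I(3) d4, of I] I(2) m3 by auto
  have X0V: "X0 \<subseteq> V - {s}" using X0 by (simp add: dang_def)
  define P where "P = {g\<in>S. oe g \<in> X0}"
  define T where "T = V - {s} - X0"
  define Q where "Q = {g\<in>S. oe g \<in> T}"
  have IP: "I \<subseteq> P" using I(1) X0(2) by (auto simp: P_def)
  have finP: "finite P" using finS by (simp add: P_def)
  have finQ: "finite Q" using finS by (simp add: Q_def)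
  have Pm: "m \<le> card P" using card_mono[OF finP IP] I(2) by simp
  have dsP: "ds X0 = card P" by (simp add: ds_def P_def)
  have deg: "dc T + 2 * card P = dc X0 + d" using deg_id[OF X0V] dsP by (simp add: T_def d_def)
  have sepT: "sepA T"
  proof -
    have "\<not> A \<subseteq> X0" "X0 \<inter> A \<noteq> {}" using X0(1) by (auto simp: dang_def sepA_def)
    then show ?thesis using A_sub by (auto simp: sepA_def T_def)
  qed
  have TV: "T \<subseteq> V - {s}" by (auto simp: T_def)
  have dcT: "l \<le> dc T" by (rule cut_ge[OF sepT])
  have dcX0: "dc X0 \<le> l + 1" using X0 by (simp add: dang_def)
  have cP: "card P = m" and dcTl: "dc T = l" using deg dcT dcX0 Pm dm m3 by linarith+
  have PQ: "P \<inter> Q = {}" by (auto simp: P_def Q_def T_def)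
  have PQS: "P \<union> Q = S" using S_ends(2,4) by (auto simp: P_def Q_def T_def)
  have cQ: "card Q = m - 1"
  proof -
    have "card S = card P + card Q" using PQS PQ card_Un_disjoint[OF finP finQ PQ] by simp
    then show ?thesis using cP dm by (simp add: d_def)
  qed
  have dangT: "dang T" using TV sepT dcTl by (simp add: dang_def)
  have A1: "\<not> lift_adm V E ends s A l e f" if "e \<in> P" "f \<in> P" for e f
    using NA_rev[OF _ _ X0(1)] that by (auto simp: P_def)
  have A2: "\<not> lift_adm V E ends s A l e f" if "e \<in> Q" "f \<in> Q" for e f
    using NA_rev[OF _ _ dangT] that by (auto simp: Q_def)
  define bad where "bad g \<longleftrightarrow> (\<exists>h\<in>Q. \<exists>Z. dang Z \<and> oe g \<in> Z \<and> oe h \<in> Z)" for g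
  have cross: "bad g" if "g \<in> P" "h \<in> Q" "\<not> lift_adm V E ends s A l g h \<or> \<not> lift_adm V E ends s A l h g" for g h
  proof -
    have gh: "g \<noteq> h" "g \<in> S" "h \<in> S" using that PQ PQS by auto
    have "\<exists>Z. dang Z \<and> oe g \<in> Z \<and> oe h \<in> Z"
      using that(3) NA[OF gh(2) gh(3) gh(1)] NA[OF gh(3) gh(2) gh(1)[symmetric]] by blast
    then show ?thesis using that(2) by (auto simp: bad_def)
  qed
  have Wd: "\<exists>W. dang W \<and> T \<subseteq> W \<and> oe g \<in> W" if gP: "g \<in> P" and bg: "bad g" for g
  proof -
    obtain h Z where hZ: "h \<in> Q" "dang Z" "oe g \<in> Z" "oe h \<in> Z" using bg by (auto simp: bad_def)
    have hS: "h \<in> S" "oe h \<in> T" using hZ(1) by (auto simp: Q_def)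
    have ZV: "Z \<subseteq> V - {s}" "sepA Z" "dc Z \<le> l + 1" using hZ(2) by (auto simp: dang_def)
    have "sepA (T \<union> Z) \<and> dc (T \<union> Z) + l \<le> dc T + dc Z"
      by (rule L1[OF TV ZV(1) sepT ZV(2) hS(1) hS(2) hZ(4)]) (use dcTl ZV(3) in simp)
    then have "dang (T \<union> Z)" using TV ZV dcTl by (auto simp: dang_def)
    then show ?thesis using hZ(3) by blast
  qed
  have A4: "\<not> lift_adm V E ends s A l g h \<and> \<not> lift_adm V E ends s A l h g" if gP: "g \<in> P" and bg: "bad g" and hQ: "h \<in> Q" for g h
  proof -
    obtain W where W: "dang W" "T \<subseteq> W" "oe g \<in> W" using Wd[OF gP bg] by blast
    have "oe h \<in> W" "h \<in> S" "g \<in> S" using gP hQ W(2) by (auto simp: Q_def P_def)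
    then show ?thesis using NA_rev[OF _ _ W(1)] W(3) by blast
  qed
  have Wlem: "\<exists>U. U \<subseteq> V - {s} \<and> sepA U \<and> dc U = l \<and> U \<inter> T = {} \<and> (\<forall>p\<in>P. p \<noteq> g \<longrightarrow> oe p \<in> U)"
    if gP: "g \<in> P" and bg: "bad g" for g
  proof -
    obtain W where W: "dang W" "T \<subseteq> W" "oe g \<in> W" using Wd[OF gP bg] by blast
    have WV: "W \<subseteq> V - {s}" using W(1) by (simp add: dang_def)
    define U where "U = V - {s} - W"
    have degW: "dc U + 2 * ds W = dc W + d" using deg_id[OF WV] by (simp add: U_def d_def)
    have sub: "insert g Q \<subseteq> {e\<in>S. oe e \<in> W}" using W gP by (auto simp: Q_def P_def)
    have gQ: "g \<notin> Q" using gP PQ by auto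
    have cins: "card (insert g Q) = m" using gQ finQ cQ m3 by simp
    have finW: "finite {e\<in>S. oe e \<in> W}" using finS by simp
    have dsW: "m \<le> ds W" using card_mono[OF finW sub] cins by (simp add: ds_def)
    have sepU: "sepA U"
    proof -
      have "\<not> A \<subseteq> W" using W(1) by (simp add: dang_def sepA_def)
      then have "U \<inter> A \<noteq> {}" using A_sub by (auto simp: U_def)
      moreover have "T \<inter> A \<noteq> {}" using sepT by (simp add: sepA_def)
      then have "\<not> A \<subseteq> U" using W(2) by (auto simp: U_def)
      ultimately show ?thesis by (simp add: sepA_def)
    qed
    have "l \<le> dc U" by (rule cut_ge[OF sepU])
    moreover have "dc W \<le> l + 1" using W(1) by (simp add: dang_def)
    ultimately have dsWm: "ds W = m" and dcU: "dc U = l" using degW dsW dm m3 by linarith+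
    have eq: "insert g Q = {e\<in>S. oe e \<in> W}"
      by (rule card_subset_eq[OF finW sub]) (use cins dsWm in \<open>simp add: ds_def\<close>)
    have pU: "\<forall>p\<in>P. p \<noteq> g \<longrightarrow> oe p \<in> U"
    proof (intro ballI impI)
      fix p assume p: "p \<in> P" "p \<noteq> g"
      have "p \<notin> insert g Q" using p PQ by auto
      then have "oe p \<notin> W" using eq p PQS by auto
      moreover have "oe p \<in> V - {s}" using p S_ends(2,4) by (auto simp: P_def)
      ultimately show "oe p \<in> U" by (simp add: U_def)
    qed
    have UT: "U \<inter> T = {}" using W(2) by (auto simp: U_def)
    have UV: "U \<subseteq> V - {s}" by (auto simp: U_def)
    show ?thesis
      apply (rule exI[of _ U])
      using UV sepU dcU UT pU by simp
  qed
  have A5: "g = g'" if gP: "g \<in> P" and bg: "bad g" and gP': "g' \<in> P" and bg': "bad g'" for g g'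
  proof (rule ccontr)
    assume gg: "g \<noteq> g'"
    obtain U where U: "U \<subseteq> V - {s}" "sepA U" "dc U = l" "U \<inter> T = {}" "\<forall>p\<in>P. p \<noteq> g \<longrightarrow> oe p \<in> U"
      using Wlem[OF gP bg] by blast
    obtain U' where U': "U' \<subseteq> V - {s}" "sepA U'" "dc U' = l" "U' \<inter> T = {}" "\<forall>p\<in>P. p \<noteq> g' \<longrightarrow> oe p \<in> U'"
      using Wlem[OF gP' bg'] by blast
    have "card (P - {g, g'}) \<ge> 1"
    proof -
      have "card (P - {g, g'}) = card P - card {g,g'}" using gP gP' finP by (intro card_Diff_subset) auto
      then show ?thesis using cP m3 gg by simp
    qed
    then obtain g0 where g0: "g0 \<in> P" "g0 \<noteq> g" "g0 \<noteq> g'" by (metis Diff_iff card_0_eq finP finite_Diff insertCI not_one_le_zero ex_in_conv)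
    have g0S: "g0 \<in> S" using g0 by (auto simp: P_def)
    have g0U: "oe g0 \<in> U" "oe g0 \<in> U'" using U(5) U'(5) g0 by auto
    have L: "sepA (U \<union> U') \<and> dc (U \<union> U') + l \<le> dc U + dc U'"
      by (rule L1[OF U(1) U'(1) U(2) U'(2) g0S g0U]) (use U(3) U'(3) in simp)
    have UUV: "U \<union> U' \<subseteq> V - {s}" using U(1) U'(1) by auto
    define T2 where "T2 = V - {s} - (U \<union> U')"
    have degT2: "dc T2 + 2 * ds (U \<union> U') = dc (U \<union> U') + d" using deg_id[OF UUV] by (simp add: T2_def d_def)
    have Psub: "P \<subseteq> {e\<in>S. oe e \<in> U \<union> U'}"
    proof
      fix p assume p: "p \<in> P"
      show "p \<in> {e\<in>S. oe e \<in> U \<union> U'}"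
      proof (cases "p = g")
        case True then show ?thesis using U'(5) p gg by (auto simp: P_def)
      next
        case False then show ?thesis using U(5) p by (auto simp: P_def)
      qed
    qed
    have "m \<le> ds (U \<union> U')" using card_mono[OF _ Psub] finS cP by (simp add: ds_def)
    then have dT2: "dc T2 + l + 1 \<le> l + l" using degT2 L U(3) U'(3) dm m3 by linarith
    have sepT2: "sepA T2"
    proof -
      have "T \<inter> A \<noteq> {}" using sepT by (simp add: sepA_def)
      moreover have "T \<subseteq> T2" using U(4) U'(4) TV by (auto simp: T2_def)
      ultimately have "T2 \<inter> A \<noteq> {}" by auto
      moreover have "oe g0 \<in> A" "oe g0 \<notin> T2" using S_ends(3)[OF g0S] g0U by (auto simp: T2_def)
      ultimately show ?thesis by (auto simp: sepA_def)
    qed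
    have "l \<le> dc T2" by (rule cut_ge[OF sepT2])
    then show False using dT2 by linarith
  qed
  have cdiv1: "(card S + 1) div 2 = m" by (simp add: m_def d_def)
  have cdiv2: "(card S - 1) div 2 = m - 1" using k m_k by (simp add: d_def)
  show ?thesis
  proof (cases "\<exists>g\<in>P. bad g")
    case False
    have "\<forall>e\<in>S. \<forall>f\<in>S. lift_adm V E ends s A l e f \<longleftrightarrow> (e \<in> P \<and> f \<in> Q \<or> e \<in> Q \<and> f \<in> P)"
    proof (intro ballI iffI)
      fix e f assume ef: "e \<in> S" "f \<in> S" "lift_adm V E ends s A l e f"
      then show "e \<in> P \<and> f \<in> Q \<or> e \<in> Q \<and> f \<in> P" using A1 A2 PQS by blast
    next
      fix e f assume ef: "e \<in> S" "f \<in> S" "e \<in> P \<and> f \<in> Q \<or> e \<in> Q \<and> f \<in> P"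
      show "lift_adm V E ends s A l e f"
      proof (rule ccontr)
        assume na: "\<not> lift_adm V E ends s A l e f"
        from ef(3) show False
        proof
          assume "e \<in> P \<and> f \<in> Q" then show False using cross[of e f] na False by blast
        next
          assume "e \<in> Q \<and> f \<in> P" then show False using cross[of f e] na False by blast
        qed
      qed
    qed
    note adj = this
    show ?thesis
      apply (rule disjI1)
      apply (rule exI[of _ P], rule exI[of _ Q])
      apply (intro conjI)
      using PQ PQS cP cQ cdiv1 cdiv2 adj by simp_all
  next
    case True
    then obtain g where g: "g \<in> P" "bad g" by blast
    have adj: "\<forall>e\<in>S. \<forall>f\<in>S. lift_adm V E ends s A l e f \<longleftrightarrow> (e \<in> P - {g} \<and> f \<in> Q \<or> e \<in> Q \<and> f \<in> P - {g})"
    proof (intro ballI iffI)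
      fix e f assume ef: "e \<in> S" "f \<in> S" "lift_adm V E ends s A l e f"
      then have "e \<in> P \<and> f \<in> Q \<or> e \<in> Q \<and> f \<in> P" using A1 A2 PQS by blast
      then show "e \<in> P - {g} \<and> f \<in> Q \<or> e \<in> Q \<and> f \<in> P - {g}" using A4[OF g] ef(3) by blast
    next
      fix e f assume ef: "e \<in> S" "f \<in> S" "e \<in> P - {g} \<and> f \<in> Q \<or> e \<in> Q \<and> f \<in> P - {g}"
      show "lift_adm V E ends s A l e f"
      proof (rule ccontr)
        assume na: "\<not> lift_adm V E ends s A l e f"
        from ef(3) show False
        proof
          assume H: "e \<in> P - {g} \<and> f \<in> Q"
          then have "bad e" using cross[of e f] na by blast
          then show False using A5[OF g] H by blast
        next
          assume H: "e \<in> Q \<and> f \<in> P - {g}"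
          then have "bad f" using cross[of f e] na by blast
          then show False using A5[OF g] H by blast
        qed
      qed
    qed
    have "g \<notin> P - {g}" "g \<notin> Q" "(P - {g}) \<inter> Q = {}" "insert g ((P - {g}) \<union> Q) = S"
      using g(1) PQ PQS by auto
    moreover have "card (P - {g}) = card Q" using cP cQ g(1) finP by simp
    ultimately show ?thesis
      apply -
      apply (rule disjI2)
      apply (rule exI[of _ g], rule exI[of _ "P - {g}"], rule exI[of _ Q])
      apply (intro conjI)
      using adj by simp_all
  qed
qed

end

theorem proposition4p5:
  fixes V :: "'v set" and E :: "'e set" and ends :: "'e \<Rightarrow> 'v set"
    and s :: 'v and A :: "'v set" and l :: nat
  assumes G: "multigraph V E ends"
    and l4: "l \<ge> 4"
    and sV: "s \<in> V"
    and AV: "A \<subset> V" and sA: "s \<notin> A"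
    and conn: "\<forall>x\<in>A. \<forall>y\<in>A. x \<noteq> y \<longrightarrow> edge_conn E ends x y \<ge> l"
    and noout: "\<forall>e\<in>E. ends e \<inter> A \<noteq> {}"
    and indep: "\<exists>I. I \<subseteq> {e\<in>E. s \<in> ends e} \<and> card I = (degree E ends s + 1) div 2 \<and>
                   (\<forall>e\<in>I. \<forall>f\<in>I. \<not> lift_adm V E ends s A l e f)"
    and odd: "odd (degree E ends s)" and deg5: "degree E ends s \<ge> 5"
  shows "(\<exists>X Y. X \<inter> Y = {} \<and> X \<union> Y = {e\<in>E. s \<in> ends e} \<and>
            card X = (degree E ends s + 1) div 2 \<and> card Y = (degree E ends s - 1) div 2 \<and>
            (\<forall>e\<in>{e\<in>E. s \<in> ends e}. \<forall>f\<in>{e\<in>E. s \<in> ends e}.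
               lift_adm V E ends s A l e f \<longleftrightarrow> (e \<in> X \<and> f \<in> Y \<or> e \<in> Y \<and> f \<in> X)))
       \<or> (\<exists>z X Y. z \<notin> X \<and> z \<notin> Y \<and> X \<inter> Y = {} \<and> insert z (X \<union> Y) = {e\<in>E. s \<in> ends e} \<and>
            card X = card Y \<and>
            (\<forall>e\<in>{e\<in>E. s \<in> ends e}. \<forall>f\<in>{e\<in>E. s \<in> ends e}.
               lift_adm V E ends s A l e f \<longleftrightarrow> (e \<in> X \<and> f \<in> Y \<or> e \<in> Y \<and> f \<in> X)))"
proof -
  interpret LG V E ends s A l
    by (unfold_locales) (use G l4 sV AV sA conn noout in auto)
  have Seq: "{e\<in>E. s \<in> ends e} = S" by (simp add: S_def)
  have deq: "degree E ends s = card S" by (simp add: degree_def S_def)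
  show ?thesis using indep odd deg5 unfolding Seq deq by (rule struct_main)
qed


end
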